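(* Let $k$ be an algebraically closed field, $A$ a graded Frobenius algebra of Gorenstein parameter $-\ell$, and $G\le\mathrm{GrAut}\,A$ a finite subgroup. Then $A*G$ is a graded Frobenius algebra of Gorenstein parameter $-\ell$.
   Context: Graded algebras are $\mathbb{N}$-graded $k$-algebras. For a graded module $M$, $M(n)_i=M_{n+i}$ and $D(M)=\bigoplus_i\mathrm{Hom}_k(M_{-i},k)$. A locally finite graded algebra $B$ is graded Frobenius of Gorenstein parameter $-\ell$ if $D(B)\cong B(\ell)$ as graded right $B$-modules. $A*G=A\otimes_kkG$ with $(a*g)(b*h)=ag(b)*gh$, graded by $A$. *)

theory Defs
  imports "HOL-Computational_Algebra.Polynomial"
begin

definition alg_closed :: "'k::field itself \<Rightarrow> bool" where
  "alg_closed _ \<longleftrightarrow> (\<forall>p :: 'k poly. degree p > 0 \<longrightarrow> (\<exists>x. poly p x = 0))"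

record ('k, 'a) gr_alg =
  gcarr  :: "'a set"
  gadd   :: "'a \<Rightarrow> 'a \<Rightarrow> 'a"
  gzero  :: "'a"
  gmul   :: "'a \<Rightarrow> 'a \<Rightarrow> 'a"
  gone   :: "'a"
  gsmul  :: "'k \<Rightarrow> 'a \<Rightarrow> 'a"
  gpiece :: "nat \<Rightarrow> 'a set"

definition lsum :: "('k, 'a) gr_alg \<Rightarrow> 'a list \<Rightarrow> 'a" where
  "lsum A xs = foldr (gadd A) xs (gzero A)"

definition ssum :: "('k, 'a) gr_alg \<Rightarrow> ('i \<Rightarrow> 'a) \<Rightarrow> 'i set \<Rightarrow> 'a" where
  "ssum A f S = Finite_Set.fold (\<lambda>x acc. gadd A (f x) acc) (gzero A) S"

definition graded_algebra :: "('k::field, 'a) gr_alg \<Rightarrow> bool" where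
  "graded_algebra A \<longleftrightarrow>
    \<comment> \<open>closure\<close>
    gzero A \<in> gcarr A \<and> gone A \<in> gcarr A \<and>
    (\<forall>x\<in>gcarr A. \<forall>y\<in>gcarr A. gadd A x y \<in> gcarr A \<and> gmul A x y \<in> gcarr A) \<and>
    (\<forall>c. \<forall>x\<in>gcarr A. gsmul A c x \<in> gcarr A) \<and>
    \<comment> \<open>k-vector space\<close>
    (\<forall>x\<in>gcarr A. \<forall>y\<in>gcarr A. \<forall>z\<in>gcarr A. gadd A (gadd A x y) z = gadd A x (gadd A y z)) \<and>
    (\<forall>x\<in>gcarr A. \<forall>y\<in>gcarr A. gadd A x y = gadd A y x) \<and>
    (\<forall>x\<in>gcarr A. gadd A (gzero A) x = x) \<and>
    (\<forall>x\<in>gcarr A. \<exists>y\<in>gcarr A. gadd A x y = gzero A) \<and>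
    (\<forall>c. \<forall>x\<in>gcarr A. \<forall>y\<in>gcarr A. gsmul A c (gadd A x y) = gadd A (gsmul A c x) (gsmul A c y)) \<and>
    (\<forall>c d. \<forall>x\<in>gcarr A. gsmul A (c + d) x = gadd A (gsmul A c x) (gsmul A d x)) \<and>
    (\<forall>c d. \<forall>x\<in>gcarr A. gsmul A c (gsmul A d x) = gsmul A (c * d) x) \<and>
    (\<forall>x\<in>gcarr A. gsmul A 1 x = x) \<and>
    \<comment> \<open>associative unital k-algebra\<close>
    (\<forall>x\<in>gcarr A. \<forall>y\<in>gcarr A. \<forall>z\<in>gcarr A. gmul A (gmul A x y) z = gmul A x (gmul A y z)) \<and>
    (\<forall>x\<in>gcarr A. gmul A (gone A) x = x \<and> gmul A x (gone A) = x) \<and>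
    (\<forall>x\<in>gcarr A. \<forall>y\<in>gcarr A. \<forall>z\<in>gcarr A.
        gmul A x (gadd A y z) = gadd A (gmul A x y) (gmul A x z) \<and>
        gmul A (gadd A x y) z = gadd A (gmul A x z) (gmul A y z)) \<and>
    (\<forall>c. \<forall>x\<in>gcarr A. \<forall>y\<in>gcarr A.
        gsmul A c (gmul A x y) = gmul A (gsmul A c x) y \<and>
        gsmul A c (gmul A x y) = gmul A x (gsmul A c y)) \<and>
    \<comment> \<open>grading: subspaces A_n\<close>
    (\<forall>n. gpiece A n \<subseteq> gcarr A \<and> gzero A \<in> gpiece A n \<and>
         (\<forall>x\<in>gpiece A n. \<forall>y\<in>gpiece A n. gadd A x y \<in> gpiece A n) \<and>
         (\<forall>c. \<forall>x\<in>gpiece A n. gsmul A c x \<in> gpiece A n)) \<and>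
    \<comment> \<open>A is the direct sum of the A_n\<close>
    (\<forall>x\<in>gcarr A. \<exists>N c. (\<forall>n<N. c n \<in> gpiece A n) \<and> x = lsum A (map c [0..<N])) \<and>
    (\<forall>N c. (\<forall>n<N. c n \<in> gpiece A n) \<and> lsum A (map c [0..<N]) = gzero A
           \<longrightarrow> (\<forall>n<N. c n = gzero A)) \<and>
    \<comment> \<open>multiplicativity of the grading\<close>
    gone A \<in> gpiece A 0 \<and>
    (\<forall>i j. \<forall>x\<in>gpiece A i. \<forall>y\<in>gpiece A j. gmul A x y \<in> gpiece A (i + j))"

definition fin_dim :: "('k::field, 'a) gr_alg \<Rightarrow> 'a set \<Rightarrow> bool" where
  "fin_dim A V \<longleftrightarrow> (\<exists>vs. set vs \<subseteq> V \<and>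
     (\<forall>x\<in>V. \<exists>cs. length cs = length vs \<and> x = lsum A (map2 (gsmul A) cs vs)))"

definition locally_finite :: "('k::field, 'a) gr_alg \<Rightarrow> bool" where
  "locally_finite A \<longleftrightarrow> (\<forall>n. fin_dim A (gpiece A n))"

(* D(B) = \<Oplus>_i Hom_k(B_{-i}, k): k-linear functionals on B vanishing on all but finitely
   many homogeneous components (extended by 0 outside the carrier) *)
definition gdual :: "('k::field, 'a) gr_alg \<Rightarrow> ('a \<Rightarrow> 'k) set" where
  "gdual B = {f. (\<forall>x\<in>gcarr B. \<forall>y\<in>gcarr B. f (gadd B x y) = f x + f y) \<and>
                 (\<forall>c. \<forall>x\<in>gcarr B. f (gsmul B c x) = c * f x) \<and>
                 (\<forall>x. x \<notin> gcarr B \<longrightarrow> f x = 0) \<and>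
                 (\<exists>N. \<forall>n\<ge>N. \<forall>x\<in>gpiece B n. f x = 0)}"

(* D(B)_i = Hom_k(B_{-i}, k) *)
definition gdual_piece :: "('k::field, 'a) gr_alg \<Rightarrow> int \<Rightarrow> ('a \<Rightarrow> 'k) set" where
  "gdual_piece B i = {f \<in> gdual B. \<forall>n. int n \<noteq> - i \<longrightarrow> (\<forall>x\<in>gpiece B n. f x = 0)}"

definition dual_ract :: "('k::field, 'a) gr_alg \<Rightarrow> ('a \<Rightarrow> 'k) \<Rightarrow> 'a \<Rightarrow> ('a \<Rightarrow> 'k)" where
  "dual_ract B f b = (\<lambda>x. if x \<in> gcarr B then f (gmul B b x) else 0)"

definition shift_piece :: "('k, 'a) gr_alg \<Rightarrow> int \<Rightarrow> int \<Rightarrow> 'a set" where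
  "shift_piece B l i = (if l + i \<ge> 0 then gpiece B (nat (l + i)) else {gzero B})"

(* B is graded Frobenius of Gorenstein parameter -l:  D(B) \<cong> B(l) as graded right B-modules *)
definition graded_frobenius :: "('k::field, 'a) gr_alg \<Rightarrow> int \<Rightarrow> bool" where
  "graded_frobenius B l \<longleftrightarrow> graded_algebra B \<and> locally_finite B \<and>
     (\<exists>\<phi> :: ('a \<Rightarrow> 'k) \<Rightarrow> 'a.
        bij_betw \<phi> (gdual B) (gcarr B) \<and>
        (\<forall>f\<in>gdual B. \<forall>g\<in>gdual B. \<phi> (\<lambda>x. f x + g x) = gadd B (\<phi> f) (\<phi> g)) \<and>
        (\<forall>c. \<forall>f\<in>gdual B. \<phi> (\<lambda>x. c * f x) = gsmul B c (\<phi> f)) \<and>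
        (\<forall>f\<in>gdual B. \<forall>b\<in>gcarr B. \<phi> (dual_ract B f b) = gmul B (\<phi> f) b) \<and>
        (\<forall>i. \<phi> ` gdual_piece B i = shift_piece B l i))"

definition GrAut :: "('k::field, 'a) gr_alg \<Rightarrow> ('a \<Rightarrow> 'a) set" where
  "GrAut A = {g. bij_betw g (gcarr A) (gcarr A) \<and>
     (\<forall>x. x \<notin> gcarr A \<longrightarrow> g x = x) \<and>
     (\<forall>x\<in>gcarr A. \<forall>y\<in>gcarr A. g (gadd A x y) = gadd A (g x) (g y)) \<and>
     (\<forall>c. \<forall>x\<in>gcarr A. g (gsmul A c x) = gsmul A c (g x)) \<and>
     (\<forall>x\<in>gcarr A. \<forall>y\<in>gcarr A. g (gmul A x y) = gmul A (g x) (g y)) \<and>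
     g (gone A) = gone A \<and>
     (\<forall>n. g ` gpiece A n = gpiece A n)}"

definition GrAut_subgroup :: "('k::field, 'a) gr_alg \<Rightarrow> ('a \<Rightarrow> 'a) set \<Rightarrow> bool" where
  "GrAut_subgroup A G \<longleftrightarrow> G \<subseteq> GrAut A \<and> id \<in> G \<and>
     (\<forall>g\<in>G. \<forall>h\<in>G. g \<circ> h \<in> G) \<and> (\<forall>g\<in>G. \<exists>h\<in>G. h \<circ> g = id)"

(* A*G = A \<otimes>_k kG: elements \<Sum>_g a_g * g are functions G \<rightarrow> A (zero outside G);
   (a*g)(b*h) = a g(b) * gh;  graded by A *)
definition skew_group_alg :: "('k::field, 'a) gr_alg \<Rightarrow> ('a \<Rightarrow> 'a) set \<Rightarrow> ('k, ('a \<Rightarrow> 'a) \<Rightarrow> 'a) gr_alg" where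
  "skew_group_alg A G =
    \<lparr> gcarr = {F. (\<forall>g\<in>G. F g \<in> gcarr A) \<and> (\<forall>g. g \<notin> G \<longrightarrow> F g = gzero A)},
      gadd = (\<lambda>F H. \<lambda>g. if g \<in> G then gadd A (F g) (H g) else gzero A),
      gzero = (\<lambda>g. gzero A),
      gmul = (\<lambda>F H. \<lambda>s. if s \<in> G then
                 ssum A (\<lambda>(g, h). gmul A (F g) (g (H h))) {(g, h). g \<in> G \<and> h \<in> G \<and> g \<circ> h = s}
               else gzero A),
      gone = (\<lambda>g. if g = id then gone A else gzero A),
      gsmul = (\<lambda>c F. \<lambda>g. if g \<in> G then gsmul A c (F g) else gzero A),
      gpiece = (\<lambda>n. {F. (\<forall>g\<in>G. F g \<in> gpiece A n) \<and> (\<forall>g. g \<notin> G \<longrightarrow> F g = gzero A)}) \<rparr>"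

end

theory Submission
  imports Defs
begin



definition addgrp :: "('k, 'a) gr_alg \<Rightarrow> bool" where
  "addgrp A \<longleftrightarrow> gzero A \<in> gcarr A \<and>
    (\<forall>x\<in>gcarr A. \<forall>y\<in>gcarr A. gadd A x y \<in> gcarr A) \<and>
    (\<forall>x\<in>gcarr A. \<forall>y\<in>gcarr A. \<forall>z\<in>gcarr A. gadd A (gadd A x y) z = gadd A x (gadd A y z)) \<and>
    (\<forall>x\<in>gcarr A. \<forall>y\<in>gcarr A. gadd A x y = gadd A y x) \<and>
    (\<forall>x\<in>gcarr A. gadd A (gzero A) x = x) \<and>
    (\<forall>x\<in>gcarr A. \<exists>y\<in>gcarr A. gadd A x y = gzero A)"

lemma ssum_as_fold:
  assumes "addgrp A" "\<And>y. y \<in> T \<Longrightarrow> f y \<in> gcarr A"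
  shows "ssum A f T = Finite_Set.fold (\<lambda>x acc. if acc \<in> gcarr A then gadd A (f x) acc else acc) (gzero A) T"
  unfolding ssum_def
  by (rule fold_closed_eq[where B="gcarr A"]) (use assms in \<open>auto simp: addgrp_def\<close>)

lemma ssum_infinite: "\<not> finite S \<Longrightarrow> ssum A f S = gzero A"
  by (simp add: ssum_def)

lemma ssum_empty[simp]: "ssum A f {} = gzero A"
  by (simp add: ssum_def)

lemma ssum_insert0:
  assumes A: "addgrp A" and fin: "finite S" and x: "x \<notin> S"
    and f: "\<And>y. y \<in> insert x S \<Longrightarrow> f y \<in> gcarr A"
  shows "ssum A f (insert x S) = (if ssum A f S \<in> gcarr A then gadd A (f x) (ssum A f S) else ssum A f S)"
proof -
  define g where "g = (\<lambda>x acc. if acc \<in> gcarr A then gadd A (f x) acc else acc)"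
  have cf: "comp_fun_commute_on (insert x S) g"
  proof
    fix u v assume u: "u \<in> insert x S" and v: "v \<in> insert x S"
    show "g v \<circ> g u = g u \<circ> g v"
    proof
      fix acc show "(g v \<circ> g u) acc = (g u \<circ> g v) acc"
      proof (cases "acc \<in> gcarr A")
        case True
        have a: "\<forall>x\<in>gcarr A. \<forall>y\<in>gcarr A. gadd A x y \<in> gcarr A"
          "\<forall>x\<in>gcarr A. \<forall>y\<in>gcarr A. \<forall>z\<in>gcarr A. gadd A (gadd A x y) z = gadd A x (gadd A y z)"
          "\<forall>x\<in>gcarr A. \<forall>y\<in>gcarr A. gadd A x y = gadd A y x"
          using A by (auto simp: addgrp_def)
        have "gadd A (f v) (gadd A (f u) acc) = gadd A (f u) (gadd A (f v) acc)"
          using a f[OF u] f[OF v] True by metis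
        then show ?thesis using a f[OF u] f[OF v] True by (simp add: g_def)
      next
        case False then show ?thesis by (simp add: g_def)
      qed
    qed
  qed
  have "ssum A f (insert x S) = Finite_Set.fold g (gzero A) (insert x S)"
    unfolding g_def by (rule ssum_as_fold[OF A f])
  also have "\<dots> = g x (Finite_Set.fold g (gzero A) S)"
    by (rule comp_fun_commute_on.fold_insert[OF cf]) (use fin x in auto)
  also have "Finite_Set.fold g (gzero A) S = ssum A f S"
    unfolding g_def by (rule ssum_as_fold[OF A, symmetric]) (use f in auto)
  finally show ?thesis using f by (simp add: g_def)
qed

lemma ssum_closed:
  assumes A: "addgrp A" and f: "\<And>y. y \<in> S \<Longrightarrow> f y \<in> gcarr A"
  shows "ssum A f S \<in> gcarr A"
proof (cases "finite S")
  case True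
  then show ?thesis using f
  proof (induction S rule: finite_induct)
    case empty then show ?case using A by (simp add: addgrp_def)
  next
    case (insert x F)
    then show ?case using ssum_insert0[OF A insert(1,2)] A by (simp add: addgrp_def)
  qed
next
  case False then show ?thesis using A by (simp add: ssum_infinite addgrp_def)
qed

lemma ssum_insert:
  assumes A: "addgrp A" and fin: "finite S" and x: "x \<notin> S"
    and f: "\<And>y. y \<in> insert x S \<Longrightarrow> f y \<in> gcarr A"
  shows "ssum A f (insert x S) = gadd A (f x) (ssum A f S)"
  using ssum_insert0[OF assms] ssum_closed[OF A, of S f] f by auto

lemma addgrp_facts:
  assumes "addgrp A"
  shows "gzero A \<in> gcarr A"
    "\<And>x y. x \<in> gcarr A \<Longrightarrow> y \<in> gcarr A \<Longrightarrow> gadd A x y \<in> gcarr A"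
    "\<And>x y z. x \<in> gcarr A \<Longrightarrow> y \<in> gcarr A \<Longrightarrow> z \<in> gcarr A \<Longrightarrow> gadd A (gadd A x y) z = gadd A x (gadd A y z)"
    "\<And>x y. x \<in> gcarr A \<Longrightarrow> y \<in> gcarr A \<Longrightarrow> gadd A x y = gadd A y x"
    "\<And>x. x \<in> gcarr A \<Longrightarrow> gadd A (gzero A) x = x"
    "\<And>x. x \<in> gcarr A \<Longrightarrow> gadd A x (gzero A) = x"
  using assms unfolding addgrp_def by auto

lemma addgrp_cancel:
  assumes A: "addgrp A" and x: "x \<in> gcarr A" and y: "y \<in> gcarr A" and e: "gadd A x y = x"
  shows "y = gzero A"
proof -
  obtain z where z: "z \<in> gcarr A" "gadd A x z = gzero A" using A x unfolding addgrp_def by blast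
  have "gadd A (gadd A x y) z = gadd A x z" using e by simp
  also have "gadd A (gadd A x y) z = gadd A y (gadd A x z)"
    using addgrp_facts[OF A] x y z by metis
  finally show ?thesis using z addgrp_facts[OF A] y by simp
qed

lemma addgrp_cancel2:
  assumes A: "addgrp A" and y: "y \<in> gcarr A" and e: "gadd A y y = y"
  shows "y = gzero A"
  using addgrp_cancel[OF A y y e] .

lemma ssum_cong:
  assumes "\<And>y. y \<in> S \<Longrightarrow> f y = g y"
  shows "ssum A f S = ssum A g S"
  unfolding ssum_def by (rule fold_closed_eq[where B=UNIV]) (use assms in auto)

lemma ssum_hom:
  assumes A: "addgrp A" and B: "addgrp B" and f: "\<And>y. y \<in> S \<Longrightarrow> f y \<in> gcarr A"
    and hc: "\<And>x. x \<in> gcarr A \<Longrightarrow> h x \<in> gcarr B"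
    and ha: "\<And>x y. x \<in> gcarr A \<Longrightarrow> y \<in> gcarr A \<Longrightarrow> h (gadd A x y) = gadd B (h x) (h y)"
    and h0: "h (gzero A) = gzero B"
  shows "h (ssum A f S) = ssum B (\<lambda>y. h (f y)) S"
proof (cases "finite S")
  case True
  then show ?thesis using f
  proof (induction S rule: finite_induct)
    case empty then show ?case using h0 by simp
  next
    case (insert x F)
    have "h (ssum A f (insert x F)) = h (gadd A (f x) (ssum A f F))"
      using ssum_insert[OF A insert(1,2)] insert(4) by simp
    also have "\<dots> = gadd B (h (f x)) (h (ssum A f F))"
      using ha insert(4) ssum_closed[OF A, of F f] by simp
    also have "\<dots> = ssum B (\<lambda>y. h (f y)) (insert x F)"
      using ssum_insert[OF B insert(1,2), of "\<lambda>y. h (f y)"] insert hc by simp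
    finally show ?case .
  qed
next
  case False then show ?thesis using h0 by (simp add: ssum_infinite)
qed

lemma ssum_lin:
  assumes A: "addgrp A" and f: "\<And>y. y \<in> S \<Longrightarrow> f y \<in> gcarr A"
    and ha: "\<And>x y. x \<in> gcarr A \<Longrightarrow> y \<in> gcarr A \<Longrightarrow> h (gadd A x y) = h x + h y"
    and h0: "h (gzero A) = 0"
  shows "h (ssum A f S) = (\<Sum>y\<in>S. h (f y))"
proof (cases "finite S")
  case True
  then show ?thesis using f
  proof (induction S rule: finite_induct)
    case empty then show ?case using h0 by simp
  next
    case (insert x F)
    then show ?case
      using ssum_insert[OF A insert(1,2)] ha ssum_closed[OF A, of F f] by simp
  qed
next
  case False then show ?thesis using h0 by (simp add: ssum_infinite)
qed

lemma ssum_add: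
  assumes A: "addgrp A" and f: "\<And>y. y \<in> S \<Longrightarrow> f y \<in> gcarr A"
    and g: "\<And>y. y \<in> S \<Longrightarrow> g y \<in> gcarr A"
  shows "ssum A (\<lambda>y. gadd A (f y) (g y)) S = gadd A (ssum A f S) (ssum A g S)"
proof (cases "finite S")
  case True
  then show ?thesis using f g
  proof (induction S rule: finite_induct)
    case empty then show ?case using addgrp_facts[OF A] by simp
  next
    case (insert x F)
    have c1: "ssum A f F \<in> gcarr A" by (rule ssum_closed[OF A]) (use insert in auto)
    have c2: "ssum A g F \<in> gcarr A" by (rule ssum_closed[OF A]) (use insert in auto)
    note c = c1 c2
    have "ssum A (\<lambda>y. gadd A (f y) (g y)) (insert x F)
        = gadd A (gadd A (f x) (g x)) (gadd A (ssum A f F) (ssum A g F))"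
      using ssum_insert[OF A insert(1,2), of "\<lambda>y. gadd A (f y) (g y)"] insert addgrp_facts[OF A]
      by simp
    also have "\<dots> = gadd A (gadd A (f x) (ssum A f F)) (gadd A (g x) (ssum A g F))"
      using c insert(4,5) addgrp_facts[OF A] by (smt (verit) insertCI)
    also have "\<dots> = gadd A (ssum A f (insert x F)) (ssum A g (insert x F))"
      using ssum_insert[OF A insert(1,2)] insert by simp
    finally show ?case .
  qed
next
  case False then show ?thesis using addgrp_facts[OF A] by (simp add: ssum_infinite)
qed

lemma ssum_zero:
  assumes A: "addgrp A" and f: "\<And>y. y \<in> S \<Longrightarrow> f y = gzero A"
  shows "ssum A f S = gzero A"
proof -
  have "ssum A f S = ssum A (\<lambda>y. gzero A) S" by (rule ssum_cong) (use f in auto)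
  also have "\<dots> = gzero A"
  proof (cases "finite S")
    case True then show ?thesis
    proof (induction S rule: finite_induct)
      case (insert x F)
      then show ?case using ssum_insert[OF A insert(1,2), of "\<lambda>y. gzero A"] addgrp_facts[OF A] by simp
    qed simp
  qed (simp add: ssum_infinite)
  finally show ?thesis .
qed

lemma ssum_single:
  assumes A: "addgrp A" and fin: "finite S" and a: "a \<in> S" and fa: "f a \<in> gcarr A"
    and f: "\<And>y. y \<in> S \<Longrightarrow> y \<noteq> a \<Longrightarrow> f y = gzero A"
  shows "ssum A f S = f a"
proof -
  have S: "S = insert a (S - {a})" using a by auto
  have "ssum A f (insert a (S - {a})) = gadd A (f a) (ssum A f (S - {a}))"
    by (rule ssum_insert[OF A]) (use fin fa f addgrp_facts(1)[OF A] in \<open>auto, metis\<close>)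
  then have "ssum A f S = gadd A (f a) (ssum A f (S - {a}))" using S by simp
  also have "ssum A f (S - {a}) = gzero A" by (rule ssum_zero[OF A]) (use f in auto)
  finally show ?thesis using addgrp_facts[OF A] fa by simp
qed

lemma ssum_reindex:
  assumes A: "addgrp A" and inj: "inj_on h S" and f: "\<And>y. y \<in> h ` S \<Longrightarrow> f y \<in> gcarr A"
  shows "ssum A f (h ` S) = ssum A (\<lambda>x. f (h x)) S"
proof (cases "finite S")
  case True
  then show ?thesis using inj f
  proof (induction S rule: finite_induct)
    case empty then show ?case by simp
  next
    case (insert x F)
    have hx: "h x \<notin> h ` F" using insert by auto
    have "ssum A f (h ` insert x F) = ssum A f (insert (h x) (h ` F))" by simp
    also have "\<dots> = gadd A (f (h x)) (ssum A f (h ` F))"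
      by (rule ssum_insert[OF A]) (use insert hx in auto)
    also have "ssum A f (h ` F) = ssum A (\<lambda>x. f (h x)) F" using insert by auto
    also have "gadd A (f (h x)) (ssum A (\<lambda>x. f (h x)) F) = ssum A (\<lambda>x. f (h x)) (insert x F)"
      by (rule ssum_insert[OF A, symmetric]) (use insert in auto)
    finally show ?case .
  qed
next
  case False
  then have "\<not> finite (h ` S)" using inj finite_imageD by blast
  then show ?thesis using False by (simp add: ssum_infinite)
qed

lemma ssum_swap:
  assumes A: "addgrp A" and fS: "finite S" and fT: "finite T"
    and f: "\<And>x y. x \<in> S \<Longrightarrow> y \<in> T \<Longrightarrow> f x y \<in> gcarr A"
  shows "ssum A (\<lambda>x. ssum A (\<lambda>y. f x y) T) S = ssum A (\<lambda>y. ssum A (\<lambda>x. f x y) S) T"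
  using fS f
proof (induction S rule: finite_induct)
  case empty
  have "ssum A (\<lambda>y. ssum A (\<lambda>x. f x y) {}) T = gzero A" by (rule ssum_zero[OF A]) simp
  then show ?case by simp
next
  case (insert a F)
  have "ssum A (\<lambda>x. ssum A (f x) T) (insert a F) = gadd A (ssum A (f a) T) (ssum A (\<lambda>x. ssum A (f x) T) F)"
    using ssum_insert[OF A insert(1,2)] ssum_closed[OF A] insert(4) by (metis insertCI)
  also have "\<dots> = gadd A (ssum A (f a) T) (ssum A (\<lambda>y. ssum A (\<lambda>x. f x y) F) T)"
    using insert by simp
  also have "\<dots> = ssum A (\<lambda>y. gadd A (f a y) (ssum A (\<lambda>x. f x y) F)) T"
    by (rule ssum_add[OF A, symmetric]) (use insert in \<open>auto intro!: ssum_closed[OF A]\<close>)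
  also have "\<dots> = ssum A (\<lambda>y. ssum A (\<lambda>x. f x y) (insert a F)) T"
    by (rule ssum_cong) (use ssum_insert[OF A insert(1,2)] insert(4) in auto)
  finally show ?case .
qed

lemma ssum_in_subset:
  assumes A: "addgrp A" and P: "P \<subseteq> gcarr A" "gzero A \<in> P"
    "\<And>x y. x \<in> P \<Longrightarrow> y \<in> P \<Longrightarrow> gadd A x y \<in> P"
    and f: "\<And>y. y \<in> S \<Longrightarrow> f y \<in> P"
  shows "ssum A f S \<in> P"
proof (cases "finite S")
  case True
  then show ?thesis using f
  proof (induction S rule: finite_induct)
    case empty then show ?case using P by simp
  next
    case (insert x F)
    have "ssum A f (insert x F) = gadd A (f x) (ssum A f F)"
      by (rule ssum_insert[OF A insert(1,2)]) (use insert P in auto)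
    then show ?case using insert P by auto
  qed
next
  case False then show ?thesis using P by (simp add: ssum_infinite)
qed




locale skew =
  fixes A :: "('k::field, 'a) gr_alg" and G :: "('a \<Rightarrow> 'a) set"
  assumes GA: "graded_algebra A" and finG: "finite G" and SG: "GrAut_subgroup A G"
begin

lemma addA: "addgrp A"
  using GA unfolding graded_algebra_def addgrp_def by (elim conjE) (intro conjI; blast)

lemma zeroC[simp]: "gzero A \<in> gcarr A" using GA[unfolded graded_algebra_def, THEN conjunct1] .
lemma oneC[simp]: "gone A \<in> gcarr A" using GA[unfolded graded_algebra_def, THEN conjunct2, THEN conjunct1] .
lemma addC[simp]: "x \<in> gcarr A \<Longrightarrow> y \<in> gcarr A \<Longrightarrow> gadd A x y \<in> gcarr A" using GA[unfolded graded_algebra_def, THEN conjunct2, THEN conjunct2, THEN conjunct1] by blast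
lemma mulC[simp]: "x \<in> gcarr A \<Longrightarrow> y \<in> gcarr A \<Longrightarrow> gmul A x y \<in> gcarr A" using GA[unfolded graded_algebra_def, THEN conjunct2, THEN conjunct2, THEN conjunct1] by blast
lemma smulC[simp]: "x \<in> gcarr A \<Longrightarrow> gsmul A c x \<in> gcarr A" using GA[unfolded graded_algebra_def, THEN conjunct2, THEN conjunct2, THEN conjunct2, THEN conjunct1] by blast
lemma add_assoc: "x \<in> gcarr A \<Longrightarrow> y \<in> gcarr A \<Longrightarrow> z \<in> gcarr A \<Longrightarrow> gadd A (gadd A x y) z = gadd A x (gadd A y z)" using GA[unfolded graded_algebra_def, THEN conjunct2, THEN conjunct2, THEN conjunct2, THEN conjunct2, THEN conjunct1] by blast
lemma add_comm: "x \<in> gcarr A \<Longrightarrow> y \<in> gcarr A \<Longrightarrow> gadd A x y = gadd A y x" using GA[unfolded graded_algebra_def, THEN conjunct2, THEN conjunct2, THEN conjunct2, THEN conjunct2, THEN conjunct2, THEN conjunct1] by blast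
lemma add_0[simp]: "x \<in> gcarr A \<Longrightarrow> gadd A (gzero A) x = x" using GA[unfolded graded_algebra_def, THEN conjunct2, THEN conjunct2, THEN conjunct2, THEN conjunct2, THEN conjunct2, THEN conjunct2, THEN conjunct1] by blast
lemma add_0r[simp]: "x \<in> gcarr A \<Longrightarrow> gadd A x (gzero A) = x" using add_comm add_0 zeroC by metis
lemma smul_add: "x \<in> gcarr A \<Longrightarrow> y \<in> gcarr A \<Longrightarrow> gsmul A c (gadd A x y) = gadd A (gsmul A c x) (gsmul A c y)" using GA[unfolded graded_algebra_def, THEN conjunct2, THEN conjunct2, THEN conjunct2, THEN conjunct2, THEN conjunct2, THEN conjunct2, THEN conjunct2, THEN conjunct2, THEN conjunct1] by blast
lemma smul_add2: "x \<in> gcarr A \<Longrightarrow> gsmul A (c + d) x = gadd A (gsmul A c x) (gsmul A d x)" using GA[unfolded graded_algebra_def, THEN conjunct2, THEN conjunct2, THEN conjunct2, THEN conjunct2, THEN conjunct2, THEN conjunct2, THEN conjunct2, THEN conjunct2, THEN conjunct2, THEN conjunct1] by blast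
lemma smul_smul: "x \<in> gcarr A \<Longrightarrow> gsmul A c (gsmul A d x) = gsmul A (c * d) x" using GA[unfolded graded_algebra_def, THEN conjunct2, THEN conjunct2, THEN conjunct2, THEN conjunct2, THEN conjunct2, THEN conjunct2, THEN conjunct2, THEN conjunct2, THEN conjunct2, THEN conjunct2, THEN conjunct1] by blast
lemma smul_1[simp]: "x \<in> gcarr A \<Longrightarrow> gsmul A 1 x = x" using GA[unfolded graded_algebra_def, THEN conjunct2, THEN conjunct2, THEN conjunct2, THEN conjunct2, THEN conjunct2, THEN conjunct2, THEN conjunct2, THEN conjunct2, THEN conjunct2, THEN conjunct2, THEN conjunct2, THEN conjunct1] by blast
lemma mul_assoc: "x \<in> gcarr A \<Longrightarrow> y \<in> gcarr A \<Longrightarrow> z \<in> gcarr A \<Longrightarrow> gmul A (gmul A x y) z = gmul A x (gmul A y z)" using GA[unfolded graded_algebra_def, THEN conjunct2, THEN conjunct2, THEN conjunct2, THEN conjunct2, THEN conjunct2, THEN conjunct2, THEN conjunct2, THEN conjunct2, THEN conjunct2, THEN conjunct2, THEN conjunct2, THEN conjunct2, THEN conjunct1] by blast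
lemma mul_1[simp]: "x \<in> gcarr A \<Longrightarrow> gmul A (gone A) x = x" using GA[unfolded graded_algebra_def, THEN conjunct2, THEN conjunct2, THEN conjunct2, THEN conjunct2, THEN conjunct2, THEN conjunct2, THEN conjunct2, THEN conjunct2, THEN conjunct2, THEN conjunct2, THEN conjunct2, THEN conjunct2, THEN conjunct2, THEN conjunct1] by blast
lemma mul_1r[simp]: "x \<in> gcarr A \<Longrightarrow> gmul A x (gone A) = x" using GA[unfolded graded_algebra_def, THEN conjunct2, THEN conjunct2, THEN conjunct2, THEN conjunct2, THEN conjunct2, THEN conjunct2, THEN conjunct2, THEN conjunct2, THEN conjunct2, THEN conjunct2, THEN conjunct2, THEN conjunct2, THEN conjunct2, THEN conjunct1] by blast
lemma distl: "x \<in> gcarr A \<Longrightarrow> y \<in> gcarr A \<Longrightarrow> z \<in> gcarr A \<Longrightarrow> gmul A x (gadd A y z) = gadd A (gmul A x y) (gmul A x z)" using GA[unfolded graded_algebra_def, THEN conjunct2, THEN conjunct2, THEN conjunct2, THEN conjunct2, THEN conjunct2, THEN conjunct2, THEN conjunct2, THEN conjunct2, THEN conjunct2, THEN conjunct2, THEN conjunct2, THEN conjunct2, THEN conjunct2, THEN conjunct2, THEN conjunct1] by blast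
lemma distr: "x \<in> gcarr A \<Longrightarrow> y \<in> gcarr A \<Longrightarrow> z \<in> gcarr A \<Longrightarrow> gmul A (gadd A x y) z = gadd A (gmul A x z) (gmul A y z)" using GA[unfolded graded_algebra_def, THEN conjunct2, THEN conjunct2, THEN conjunct2, THEN conjunct2, THEN conjunct2, THEN conjunct2, THEN conjunct2, THEN conjunct2, THEN conjunct2, THEN conjunct2, THEN conjunct2, THEN conjunct2, THEN conjunct2, THEN conjunct2, THEN conjunct1] by blast
lemma smul_mul: "x \<in> gcarr A \<Longrightarrow> y \<in> gcarr A \<Longrightarrow> gsmul A c (gmul A x y) = gmul A (gsmul A c x) y" using GA[unfolded graded_algebra_def, THEN conjunct2, THEN conjunct2, THEN conjunct2, THEN conjunct2, THEN conjunct2, THEN conjunct2, THEN conjunct2, THEN conjunct2, THEN conjunct2, THEN conjunct2, THEN conjunct2, THEN conjunct2, THEN conjunct2, THEN conjunct2, THEN conjunct2, THEN conjunct1] by blast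
lemma smul_mul2: "x \<in> gcarr A \<Longrightarrow> y \<in> gcarr A \<Longrightarrow> gsmul A c (gmul A x y) = gmul A x (gsmul A c y)" using GA[unfolded graded_algebra_def, THEN conjunct2, THEN conjunct2, THEN conjunct2, THEN conjunct2, THEN conjunct2, THEN conjunct2, THEN conjunct2, THEN conjunct2, THEN conjunct2, THEN conjunct2, THEN conjunct2, THEN conjunct2, THEN conjunct2, THEN conjunct2, THEN conjunct2, THEN conjunct1] by blast
lemma piece_sub: "gpiece A n \<subseteq> gcarr A" using GA[unfolded graded_algebra_def, THEN conjunct2, THEN conjunct2, THEN conjunct2, THEN conjunct2, THEN conjunct2, THEN conjunct2, THEN conjunct2, THEN conjunct2, THEN conjunct2, THEN conjunct2, THEN conjunct2, THEN conjunct2, THEN conjunct2, THEN conjunct2, THEN conjunct2, THEN conjunct2, THEN conjunct1] by blast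
lemma piece_0[simp]: "gzero A \<in> gpiece A n" using GA[unfolded graded_algebra_def, THEN conjunct2, THEN conjunct2, THEN conjunct2, THEN conjunct2, THEN conjunct2, THEN conjunct2, THEN conjunct2, THEN conjunct2, THEN conjunct2, THEN conjunct2, THEN conjunct2, THEN conjunct2, THEN conjunct2, THEN conjunct2, THEN conjunct2, THEN conjunct2, THEN conjunct1] by blast
lemma piece_add: "x \<in> gpiece A n \<Longrightarrow> y \<in> gpiece A n \<Longrightarrow> gadd A x y \<in> gpiece A n" using GA[unfolded graded_algebra_def, THEN conjunct2, THEN conjunct2, THEN conjunct2, THEN conjunct2, THEN conjunct2, THEN conjunct2, THEN conjunct2, THEN conjunct2, THEN conjunct2, THEN conjunct2, THEN conjunct2, THEN conjunct2, THEN conjunct2, THEN conjunct2, THEN conjunct2, THEN conjunct2, THEN conjunct1] by blast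
lemma piece_smul: "x \<in> gpiece A n \<Longrightarrow> gsmul A c x \<in> gpiece A n" using GA[unfolded graded_algebra_def, THEN conjunct2, THEN conjunct2, THEN conjunct2, THEN conjunct2, THEN conjunct2, THEN conjunct2, THEN conjunct2, THEN conjunct2, THEN conjunct2, THEN conjunct2, THEN conjunct2, THEN conjunct2, THEN conjunct2, THEN conjunct2, THEN conjunct2, THEN conjunct2, THEN conjunct1] by blast
lemma decomp: "x \<in> gcarr A \<Longrightarrow> \<exists>N cc. (\<forall>n<N. cc n \<in> gpiece A n) \<and> x = lsum A (map cc [0..<N])" using GA[unfolded graded_algebra_def, THEN conjunct2, THEN conjunct2, THEN conjunct2, THEN conjunct2, THEN conjunct2, THEN conjunct2, THEN conjunct2, THEN conjunct2, THEN conjunct2, THEN conjunct2, THEN conjunct2, THEN conjunct2, THEN conjunct2, THEN conjunct2, THEN conjunct2, THEN conjunct2, THEN conjunct2, THEN conjunct1] by blast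
lemma uniq: "(\<forall>n<N. cc n \<in> gpiece A n) \<Longrightarrow> lsum A (map cc [0..<N]) = gzero A \<Longrightarrow> n < N \<Longrightarrow> cc n = gzero A" using GA[unfolded graded_algebra_def, THEN conjunct2, THEN conjunct2, THEN conjunct2, THEN conjunct2, THEN conjunct2, THEN conjunct2, THEN conjunct2, THEN conjunct2, THEN conjunct2, THEN conjunct2, THEN conjunct2, THEN conjunct2, THEN conjunct2, THEN conjunct2, THEN conjunct2, THEN conjunct2, THEN conjunct2, THEN conjunct2, THEN conjunct1] by blast
lemma one_piece: "gone A \<in> gpiece A 0" using GA[unfolded graded_algebra_def, THEN conjunct2, THEN conjunct2, THEN conjunct2, THEN conjunct2, THEN conjunct2, THEN conjunct2, THEN conjunct2, THEN conjunct2, THEN conjunct2, THEN conjunct2, THEN conjunct2, THEN conjunct2, THEN conjunct2, THEN conjunct2, THEN conjunct2, THEN conjunct2, THEN conjunct2, THEN conjunct2, THEN conjunct2, THEN conjunct1] .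
lemma piece_mul: "x \<in> gpiece A i \<Longrightarrow> y \<in> gpiece A j \<Longrightarrow> gmul A x y \<in> gpiece A (i + j)" using GA[unfolded graded_algebra_def, THEN conjunct2, THEN conjunct2, THEN conjunct2, THEN conjunct2, THEN conjunct2, THEN conjunct2, THEN conjunct2, THEN conjunct2, THEN conjunct2, THEN conjunct2, THEN conjunct2, THEN conjunct2, THEN conjunct2, THEN conjunct2, THEN conjunct2, THEN conjunct2, THEN conjunct2, THEN conjunct2, THEN conjunct2, THEN conjunct2] by blast

lemma pieceC: "x \<in> gpiece A n \<Longrightarrow> x \<in> gcarr A"
  using piece_sub by blast

lemma mul_0[simp]: "x \<in> gcarr A \<Longrightarrow> gmul A (gzero A) x = gzero A"
  by (rule addgrp_cancel2[OF addA]) (simp, metis distr add_0 zeroC)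

lemma mul_0r[simp]: "x \<in> gcarr A \<Longrightarrow> gmul A x (gzero A) = gzero A"
  by (rule addgrp_cancel2[OF addA]) (simp, metis distl add_0 zeroC)

lemma smul_0[simp]: "gsmul A c (gzero A) = gzero A"
  by (rule addgrp_cancel2[OF addA]) (simp, metis smul_add add_0 zeroC)

lemma lin_0:
  assumes "\<And>x y. x \<in> gcarr A \<Longrightarrow> y \<in> gcarr A \<Longrightarrow> f (gadd A x y) = f x + (f y :: 'k)"
  shows "f (gzero A) = 0"
proof -
  have e: "f (gzero A) = f (gzero A) + f (gzero A)" using assms[of "gzero A" "gzero A"] by simp
  show ?thesis using e by (metis add_cancel_right_right)
qed

lemma G_aut: "g \<in> G \<Longrightarrow> g \<in> GrAut A"
  using SG unfolding GrAut_subgroup_def by auto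

lemma idG[simp]: "id \<in> G" and compG[simp]: "g \<in> G \<Longrightarrow> h \<in> G \<Longrightarrow> g \<circ> h \<in> G"
  using SG unfolding GrAut_subgroup_def by auto

lemma aut_facts:
  assumes "g \<in> G"
  shows "bij_betw g (gcarr A) (gcarr A)" "\<And>x. x \<notin> gcarr A \<Longrightarrow> g x = x"
    "\<And>x y. x \<in> gcarr A \<Longrightarrow> y \<in> gcarr A \<Longrightarrow> g (gadd A x y) = gadd A (g x) (g y)"
    "\<And>x. x \<in> gcarr A \<Longrightarrow> g (gsmul A c x) = gsmul A c (g x)"
    "\<And>x y. x \<in> gcarr A \<Longrightarrow> y \<in> gcarr A \<Longrightarrow> g (gmul A x y) = gmul A (g x) (g y)"
    "g (gone A) = gone A" "g ` gpiece A n = gpiece A n"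
  using G_aut[OF assms] unfolding GrAut_def by auto

lemma autC[simp]: "g \<in> G \<Longrightarrow> x \<in> gcarr A \<Longrightarrow> g x \<in> gcarr A"
  using aut_facts(1) bij_betwE by blast

lemma aut_add: "g \<in> G \<Longrightarrow> x \<in> gcarr A \<Longrightarrow> y \<in> gcarr A \<Longrightarrow> g (gadd A x y) = gadd A (g x) (g y)"
  and aut_smul: "g \<in> G \<Longrightarrow> x \<in> gcarr A \<Longrightarrow> g (gsmul A c x) = gsmul A c (g x)"
  and aut_mul: "g \<in> G \<Longrightarrow> x \<in> gcarr A \<Longrightarrow> y \<in> gcarr A \<Longrightarrow> g (gmul A x y) = gmul A (g x) (g y)"
  using aut_facts by auto

lemma aut_0[simp]: "g \<in> G \<Longrightarrow> g (gzero A) = gzero A"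
  by (rule addgrp_cancel2[OF addA]) (simp, metis aut_add add_0 zeroC)

lemma aut_piece: "g \<in> G \<Longrightarrow> x \<in> gpiece A n \<Longrightarrow> g x \<in> gpiece A n"
  using aut_facts(7) by blast

lemma bijG: assumes "g \<in> G" shows "bij g"
proof -
  have b: "bij_betw g (gcarr A) (gcarr A)" and o: "\<And>x. x \<notin> gcarr A \<Longrightarrow> g x = x"
    using aut_facts[OF assms] by auto
  have "inj g"
  proof (rule injI)
    fix x y assume e: "g x = g y"
    show "x = y"
    proof (cases "x \<in> gcarr A"; cases "y \<in> gcarr A")
      assume "x \<in> gcarr A" "y \<in> gcarr A" then show ?thesis using b e by (metis bij_betw_imp_inj_on inj_onD)
    next
      assume "x \<in> gcarr A" "y \<notin> gcarr A" then show ?thesis using b e o by (metis bij_betwE)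
    next
      assume "x \<notin> gcarr A" "y \<in> gcarr A" then show ?thesis using b e o by (metis bij_betwE)
    next
      assume "x \<notin> gcarr A" "y \<notin> gcarr A" then show ?thesis using e o by simp
    qed
  qed
  moreover have "surj g"
  proof -
    { fix y have "y \<in> range g"
      proof (cases "y \<in> gcarr A")
        case True
        have "g ` gcarr A = gcarr A" using b by (simp add: bij_betw_def)
        then show ?thesis using True by blast
      next
        case False then have "g y = y" using o by blast
        then show ?thesis by (metis rangeI)
      qed }
    then show ?thesis by blast
  qed
  ultimately show ?thesis by (simp add: bij_def)
qed

lemma inv_comp1[simp]: "g \<in> G \<Longrightarrow> g \<circ> inv g = id" and inv_comp2[simp]: "g \<in> G \<Longrightarrow> inv g \<circ> g = id"
proof -
  assume g: "g \<in> G" show "g \<circ> inv g = id" using bijG[OF g] surj_iff bij_is_surj by blast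
next
  assume g: "g \<in> G" show "inv g \<circ> g = id" using bijG[OF g] inj_iff bij_is_inj by blast
qed

lemma invG[simp]: assumes "g \<in> G" shows "inv g \<in> G"
proof -
  obtain h where h: "h \<in> G" "h \<circ> g = id" using SG assms unfolding GrAut_subgroup_def by blast
  have "h = h \<circ> (g \<circ> inv g)" using assms by simp
  also have "\<dots> = (h \<circ> g) \<circ> inv g" by (simp add: comp_assoc)
  finally have "h = inv g" using h(2) by simp
  then show ?thesis using h by simp
qed

lemma inv_app1[simp]: "g \<in> G \<Longrightarrow> g (inv g x) = x" and inv_app2[simp]: "g \<in> G \<Longrightarrow> inv g (g x) = x"
  using inv_comp1 inv_comp2 by (metis comp_apply id_apply, metis comp_apply id_apply)

lemma inv_compG: "g \<in> G \<Longrightarrow> h \<in> G \<Longrightarrow> inv (g \<circ> h) = inv h \<circ> inv g"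
  using bijG o_inv_distrib by blast

lemma inv_invG[simp]: "g \<in> G \<Longrightarrow> inv (inv g) = g"
  using bijG inv_inv_eq by blast

end



context skew begin

abbreviation "B \<equiv> skew_group_alg A G"

lemma B_sel[simp]:
  "gcarr B = {F. (\<forall>g\<in>G. F g \<in> gcarr A) \<and> (\<forall>g. g \<notin> G \<longrightarrow> F g = gzero A)}"
  "gadd B F H = (\<lambda>g. if g \<in> G then gadd A (F g) (H g) else gzero A)"
  "gzero B = (\<lambda>g. gzero A)"
  "gone B = (\<lambda>g. if g = id then gone A else gzero A)"
  "gsmul B c F = (\<lambda>g. if g \<in> G then gsmul A c (F g) else gzero A)"
  "gpiece B n = {F. (\<forall>g\<in>G. F g \<in> gpiece A n) \<and> (\<forall>g. g \<notin> G \<longrightarrow> F g = gzero A)}"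
  by (simp_all add: skew_group_alg_def)

lemma gmulB_def: "gmul B F H = (\<lambda>s. if s \<in> G then
                 ssum A (\<lambda>(g, h). gmul A (F g) (g (H h))) {(g, h). g \<in> G \<and> h \<in> G \<and> g \<circ> h = s}
               else gzero A)"
  by (simp add: skew_group_alg_def)

lemma CB_in: "F \<in> gcarr B \<Longrightarrow> g \<in> G \<Longrightarrow> F g \<in> gcarr A"
  and CB_out: "F \<in> gcarr B \<Longrightarrow> g \<notin> G \<Longrightarrow> F g = gzero A"
  by auto

lemma CB_I: "(\<And>g. g \<in> G \<Longrightarrow> F g \<in> gcarr A) \<Longrightarrow> (\<And>g. g \<notin> G \<Longrightarrow> F g = gzero A) \<Longrightarrow> F \<in> gcarr B"
  by auto

lemma CB_eq: "F \<in> gcarr B \<Longrightarrow> H \<in> gcarr B \<Longrightarrow> (\<And>g. g \<in> G \<Longrightarrow> F g = H g) \<Longrightarrow> F = H"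
  by (rule ext) (metis CB_out)

lemma addB: "addgrp B"
  unfolding addgrp_def
proof (intro conjI ballI)
  show "gzero B \<in> gcarr B" by simp
  fix x assume x: "x \<in> gcarr B"
  show "gadd B (gzero B) x = x" using x by (auto intro!: CB_eq)
  show "\<exists>y\<in>gcarr B. gadd B x y = gzero B"
  proof -
    have inv: "\<forall>u\<in>gcarr A. \<exists>y\<in>gcarr A. gadd A u y = gzero A"
      using addA unfolding addgrp_def by blast
    have "\<forall>g\<in>G. \<exists>y\<in>gcarr A. gadd A (x g) y = gzero A"
    proof
      fix g assume "g \<in> G" then have "x g \<in> gcarr A" using x by auto
      then show "\<exists>y\<in>gcarr A. gadd A (x g) y = gzero A" using inv by blast
    qed
    then obtain y where y: "\<And>g. g \<in> G \<Longrightarrow> y g \<in> gcarr A \<and> gadd A (x g) (y g) = gzero A"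
      by metis
    define y' where "y' = (\<lambda>g. if g \<in> G then y g else gzero A)"
    have "y' \<in> gcarr B" using y by (auto simp: y'_def)
    moreover have "gadd B x y' = gzero B" using y by (auto simp: y'_def)
    ultimately show ?thesis by blast
  qed
  fix y assume y: "y \<in> gcarr B"
  show "gadd B x y \<in> gcarr B" using x y by auto
  show "gadd B x y = gadd B y x" using x y by (auto simp: add_comm)
  fix z assume z: "z \<in> gcarr B"
  show "gadd B (gadd B x y) z = gadd B x (gadd B y z)" using x y z by (auto simp: add_assoc)
qed

lemma evalB:
  assumes "\<And>x. x \<in> S \<Longrightarrow> Fs x \<in> gcarr B" "s \<in> G"
  shows "ssum B Fs S s = ssum A (\<lambda>x. Fs x s) S"
  by (rule ssum_hom[OF addB addA, where h="\<lambda>X. X s"]) (use assms in auto)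

lemma pairs_eq:
  assumes s: "s \<in> G"
  shows "{(g, h). g \<in> G \<and> h \<in> G \<and> g \<circ> h = s} = (\<lambda>g. (g, inv g \<circ> s)) ` G"
proof -
  { fix g h assume "g \<in> G" "h \<in> G" "g \<circ> h = s"
    then have "h = inv g \<circ> s" by (metis comp_assoc comp_id inv_comp2 id_comp) }
  moreover
  { fix g assume g: "g \<in> G" then have "g \<circ> (inv g \<circ> s) = s" by (simp flip: comp_assoc) }
  ultimately show ?thesis using s by auto
qed

lemma mulB:
  assumes F: "F \<in> gcarr B" and H: "H \<in> gcarr B" and s: "s \<in> G"
  shows "gmul B F H s = ssum A (\<lambda>g. gmul A (F g) (g (H (inv g \<circ> s)))) G"
proof -
  have "gmul B F H s = ssum A (\<lambda>(g, h). gmul A (F g) (g (H h))) ((\<lambda>g. (g, inv g \<circ> s)) ` G)"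
    using s by (simp add: gmulB_def pairs_eq)
  also have "\<dots> = ssum A (\<lambda>g. gmul A (F g) (g (H (inv g \<circ> s)))) G"
    by (subst ssum_reindex[OF addA]) (use F H s in \<open>auto simp: inj_on_def\<close>)
  finally show ?thesis .
qed

lemma mulB_out: "s \<notin> G \<Longrightarrow> gmul B F H s = gzero A"
  by (simp add: gmulB_def)

lemma mulBC[simp]:
  assumes F: "F \<in> gcarr B" and H: "H \<in> gcarr B"
  shows "gmul B F H \<in> gcarr B"
proof (rule CB_I)
  fix s assume s: "s \<in> G"
  show "gmul B F H s \<in> gcarr A"
    unfolding mulB[OF F H s] by (rule ssum_closed[OF addA]) (use F H s in auto)
qed (simp add: mulB_out)

end



context skew begin

lemma ssum_mul_r: "(\<And>x. x \<in> S \<Longrightarrow> f x \<in> gcarr A) \<Longrightarrow> y \<in> gcarr A \<Longrightarrow>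
  gmul A (ssum A f S) y = ssum A (\<lambda>x. gmul A (f x) y) S"
  by (rule ssum_hom[OF addA addA, where h="\<lambda>x. gmul A x y"]) (auto simp: distr)

lemma ssum_mul_l: "(\<And>x. x \<in> S \<Longrightarrow> f x \<in> gcarr A) \<Longrightarrow> y \<in> gcarr A \<Longrightarrow>
  gmul A y (ssum A f S) = ssum A (\<lambda>x. gmul A y (f x)) S"
  by (rule ssum_hom[OF addA addA, where h="\<lambda>x. gmul A y x"]) (auto simp: distl)

lemma ssum_aut: "(\<And>x. x \<in> S \<Longrightarrow> f x \<in> gcarr A) \<Longrightarrow> g \<in> G \<Longrightarrow>
  g (ssum A f S) = ssum A (\<lambda>x. g (f x)) S"
  by (rule ssum_hom[OF addA addA, where h="g"]) (auto simp: aut_add)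

lemma ssum_smul: "(\<And>x. x \<in> S \<Longrightarrow> f x \<in> gcarr A) \<Longrightarrow>
  gsmul A c (ssum A f S) = ssum A (\<lambda>x. gsmul A c (f x)) S"
  by (rule ssum_hom[OF addA addA, where h="gsmul A c"]) (auto simp: smul_add)

lemma reindex_G:
  assumes g: "g \<in> G" and f: "\<And>x. x \<in> G \<Longrightarrow> f x \<in> gcarr A"
  shows "ssum A f G = ssum A (\<lambda>u. f (g \<circ> u)) G"
proof -
  have im: "(\<lambda>u. g \<circ> u) ` G = G"
  proof
    show "(\<lambda>u. g \<circ> u) ` G \<subseteq> G" using g by auto
    show "G \<subseteq> (\<lambda>u. g \<circ> u) ` G"
    proof
      fix u assume u: "u \<in> G"
      have "u = g \<circ> (inv g \<circ> u)" using g by (metis comp_assoc inv_comp1 id_comp)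
      moreover have "inv g \<circ> u \<in> G" using u g by simp
      ultimately show "u \<in> (\<lambda>u. g \<circ> u) ` G" by (rule image_eqI)
    qed
  qed
  have inj: "inj_on (\<lambda>u. g \<circ> u) G"
  proof (rule inj_onI)
    fix u v assume "g \<circ> u = g \<circ> v"
    then have "inv g \<circ> (g \<circ> u) = inv g \<circ> (g \<circ> v)" by simp
    then show "u = v" using g by (metis comp_assoc inv_comp2 id_comp)
  qed
  have "ssum A f G = ssum A f ((\<lambda>u. g \<circ> u) ` G)" using im by simp
  also have "\<dots> = ssum A (\<lambda>u. f (g \<circ> u)) G"
    by (rule ssum_reindex[OF addA inj]) (use f im in auto)
  finally show ?thesis .
qed

lemma cancel_mid: "g \<in> G \<Longrightarrow> (a \<circ> g) \<circ> (inv g \<circ> b) = a \<circ> b"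
  by (metis comp_assoc comp_id inv_comp1)

lemma mulB_assoc:
  assumes F: "F \<in> gcarr B" and H: "H \<in> gcarr B" and K: "K \<in> gcarr B"
  shows "gmul B (gmul B F H) K = gmul B F (gmul B H K)"
proof (rule CB_eq)
  show "gmul B (gmul B F H) K \<in> gcarr B" "gmul B F (gmul B H K) \<in> gcarr B"
    by (rule mulBC[OF mulBC[OF F H] K], rule mulBC[OF F mulBC[OF H K]])
  fix s assume s: "s \<in> G"
  have Fc: "\<And>g. g \<in> G \<Longrightarrow> F g \<in> gcarr A" and Hc: "\<And>g. g \<in> G \<Longrightarrow> H g \<in> gcarr A"
    and Kc: "\<And>g. g \<in> G \<Longrightarrow> K g \<in> gcarr A" using F H K by auto
  define T where "T = (\<lambda>g u. gmul A (gmul A (F g) (g (H (inv g \<circ> u)))) (u (K (inv u \<circ> s))))"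
  have Tc: "\<And>g u. g \<in> G \<Longrightarrow> u \<in> G \<Longrightarrow> T g u \<in> gcarr A"
    unfolding T_def using Fc Hc Kc s by auto
  have "gmul B (gmul B F H) K s = ssum A (\<lambda>u. gmul A (gmul B F H u) (u (K (inv u \<circ> s)))) G"
    by (rule mulB[OF mulBC[OF F H] K s])
  also have "\<dots> = ssum A (\<lambda>u. ssum A (\<lambda>g. T g u) G) G"
  proof (rule ssum_cong)
    fix u assume u: "u \<in> G"
    have "gmul A (gmul B F H u) (u (K (inv u \<circ> s)))
        = gmul A (ssum A (\<lambda>g. gmul A (F g) (g (H (inv g \<circ> u)))) G) (u (K (inv u \<circ> s)))"
      by (simp only: mulB[OF F H u])
    also have "\<dots> = ssum A (\<lambda>g. T g u) G"
      unfolding T_def by (rule ssum_mul_r) (use Fc Hc Kc u s in auto)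
    finally show "gmul A (gmul B F H u) (u (K (inv u \<circ> s))) = ssum A (\<lambda>g. T g u) G" .
  qed
  also have "\<dots> = ssum A (\<lambda>g. ssum A (\<lambda>u. T g u) G) G"
    by (rule ssum_swap[OF addA finG finG, symmetric]) (use Tc in auto)
  also have "\<dots> = gmul B F (gmul B H K) s"
  proof -
    have "gmul B F (gmul B H K) s = ssum A (\<lambda>g. gmul A (F g) (g (gmul B H K (inv g \<circ> s)))) G"
      by (rule mulB[OF F mulBC[OF H K] s])
    also have "\<dots> = ssum A (\<lambda>g. ssum A (\<lambda>u. T g u) G) G"
    proof (rule ssum_cong)
      fix g assume g: "g \<in> G"
      define P where "P = (\<lambda>h. gmul A (F g) (gmul A (g (H h)) (g (h (K (inv h \<circ> (inv g \<circ> s)))))))"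
      have Pc: "\<And>h. h \<in> G \<Longrightarrow> P h \<in> gcarr A" unfolding P_def using Fc Hc Kc g s by auto
      have "gmul A (F g) (g (gmul B H K (inv g \<circ> s)))
          = gmul A (F g) (g (ssum A (\<lambda>h. gmul A (H h) (h (K (inv h \<circ> (inv g \<circ> s))))) G))"
        using g s by (simp only: mulB[OF H K compG[OF invG[OF g] s]])
      also have "\<dots> = gmul A (F g) (ssum A (\<lambda>h. g (gmul A (H h) (h (K (inv h \<circ> (inv g \<circ> s)))))) G)"
        by (subst ssum_aut) (use Hc Kc g s in auto)
      also have "\<dots> = ssum A (\<lambda>h. gmul A (F g) (g (gmul A (H h) (h (K (inv h \<circ> (inv g \<circ> s))))))) G"
        by (rule ssum_mul_l) (use Fc Hc Kc g s in auto)
      also have "\<dots> = ssum A P G"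
        by (rule ssum_cong) (use Hc Kc g s in \<open>auto simp: P_def aut_mul\<close>)
      also have "\<dots> = ssum A (\<lambda>u. P (inv g \<circ> u)) G"
        by (rule reindex_G) (use g Pc in auto)
      also have "\<dots> = ssum A (\<lambda>u. T g u) G"
      proof (rule ssum_cong)
        fix u assume u: "u \<in> G"
        have e1: "inv (inv g \<circ> u) \<circ> (inv g \<circ> s) = inv u \<circ> s"
          using g u by (simp add: inv_compG cancel_mid)
        have e2: "g ((inv g \<circ> u) y) = u y" for y using g by simp
        show "P (inv g \<circ> u) = T g u"
          unfolding P_def T_def e1 e2 using Fc Hc Kc g u s by (simp add: mul_assoc)
      qed
      finally show "gmul A (F g) (g (gmul B H K (inv g \<circ> s))) = ssum A (\<lambda>u. T g u) G" .
    qed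
    finally show ?thesis by simp
  qed
  finally show "gmul B (gmul B F H) K s = gmul B F (gmul B H K) s" .
qed

end



context skew begin

declare B_sel[simp del]

lemma CB_iff: "F \<in> gcarr B \<longleftrightarrow> (\<forall>g\<in>G. F g \<in> gcarr A) \<and> (\<forall>g. g \<notin> G \<longrightarrow> F g = gzero A)"
  by (simp add: B_sel(1))

lemma B_app[simp]: "g \<in> G \<Longrightarrow> gadd B F H g = gadd A (F g) (H g)"
  "g \<in> G \<Longrightarrow> gsmul B c F g = gsmul A c (F g)"
  "gzero B g = gzero A"
  "gone B g = (if g = id then gone A else gzero A)"
  by (simp_all add: B_sel)

lemma B_app_out: "g \<notin> G \<Longrightarrow> gadd B F H g = gzero A"
  "g \<notin> G \<Longrightarrow> gsmul B c F g = gzero A"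
  by (simp_all add: B_sel)

lemma pieceB_iff: "F \<in> gpiece B n \<longleftrightarrow> (\<forall>g\<in>G. F g \<in> gpiece A n) \<and> (\<forall>g. g \<notin> G \<longrightarrow> F g = gzero A)"
  by (simp add: B_sel)

lemma zeroB_C[simp]: "gzero B \<in> gcarr B" and oneB_C[simp]: "gone B \<in> gcarr B"
  by (auto simp: CB_iff B_sel)

lemma addB_C[simp]: "F \<in> gcarr B \<Longrightarrow> H \<in> gcarr B \<Longrightarrow> gadd B F H \<in> gcarr B"
  and smulB_C[simp]: "F \<in> gcarr B \<Longrightarrow> gsmul B c F \<in> gcarr B"
  by (auto simp: CB_iff B_sel)

lemma mulB_1l:
  assumes F: "F \<in> gcarr B" shows "gmul B (gone B) F = F"
proof (rule CB_eq)
  show "gmul B (gone B) F \<in> gcarr B" using F by simp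
  show "F \<in> gcarr B" by (rule F)
  fix s assume s: "s \<in> G"
  have "gmul B (gone B) F s = ssum A (\<lambda>g. gmul A (gone B g) (g (F (inv g \<circ> s)))) G"
    by (rule mulB[OF oneB_C F s])
  also have "\<dots> = gmul A (gone B id) (id (F (inv id \<circ> s)))"
    by (rule ssum_single[OF addA finG]) (use F s in \<open>auto simp: CB_iff\<close>)
  also have "\<dots> = F s" using F s by (simp add: CB_iff)
  finally show "gmul B (gone B) F s = F s" .
qed

lemma mulB_1r:
  assumes F: "F \<in> gcarr B" shows "gmul B F (gone B) = F"
proof (rule CB_eq)
  show "gmul B F (gone B) \<in> gcarr B" using F by simp
  show "F \<in> gcarr B" by (rule F)
  fix s assume s: "s \<in> G"
  have ne: "inv g \<circ> s \<noteq> id" if "g \<in> G" "g \<noteq> s" for g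
  proof
    assume "inv g \<circ> s = id"
    then have "g \<circ> (inv g \<circ> s) = g" by simp
    then show False using that by (metis comp_assoc inv_comp1 id_comp)
  qed
  have "gmul B F (gone B) s = ssum A (\<lambda>g. gmul A (F g) (g (gone B (inv g \<circ> s)))) G"
    by (rule mulB[OF F oneB_C s])
  also have "\<dots> = gmul A (F s) (s (gone B (inv s \<circ> s)))"
    by (rule ssum_single[OF addA finG s]) (use F s ne in \<open>auto simp: CB_iff\<close>)
  also have "\<dots> = F s" using F s aut_facts(6)[OF s] by (simp add: CB_iff)
  finally show "gmul B F (gone B) s = F s" .
qed

lemma mulB_distl:
  assumes F: "F \<in> gcarr B" and H: "H \<in> gcarr B" and K: "K \<in> gcarr B"
  shows "gmul B F (gadd B H K) = gadd B (gmul B F H) (gmul B F K)"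
proof (rule CB_eq)
  show "gmul B F (gadd B H K) \<in> gcarr B" "gadd B (gmul B F H) (gmul B F K) \<in> gcarr B"
    using F H K by simp_all
  fix s assume s: "s \<in> G"
  have "gmul B F (gadd B H K) s = ssum A (\<lambda>g. gmul A (F g) (g (gadd B H K (inv g \<circ> s)))) G"
    by (rule mulB[OF F _ s]) (use H K in simp)
  also have "\<dots> = ssum A (\<lambda>g. gadd A (gmul A (F g) (g (H (inv g \<circ> s)))) (gmul A (F g) (g (K (inv g \<circ> s))))) G"
    by (rule ssum_cong) (use F H K s in \<open>auto simp: CB_iff aut_add distl\<close>)
  also have "\<dots> = gadd A (ssum A (\<lambda>g. gmul A (F g) (g (H (inv g \<circ> s)))) G) (ssum A (\<lambda>g. gmul A (F g) (g (K (inv g \<circ> s)))) G)"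
    by (rule ssum_add[OF addA]) (use F H K s in \<open>auto simp: CB_iff\<close>)
  also have "\<dots> = gadd B (gmul B F H) (gmul B F K) s"
    using s by (simp add: mulB[OF F H s] mulB[OF F K s])
  finally show "gmul B F (gadd B H K) s = gadd B (gmul B F H) (gmul B F K) s" .
qed

lemma mulB_distr:
  assumes F: "F \<in> gcarr B" and H: "H \<in> gcarr B" and K: "K \<in> gcarr B"
  shows "gmul B (gadd B F H) K = gadd B (gmul B F K) (gmul B H K)"
proof (rule CB_eq)
  show "gmul B (gadd B F H) K \<in> gcarr B" "gadd B (gmul B F K) (gmul B H K) \<in> gcarr B"
    using F H K by simp_all
  fix s assume s: "s \<in> G"
  have "gmul B (gadd B F H) K s = ssum A (\<lambda>g. gmul A (gadd B F H g) (g (K (inv g \<circ> s)))) G"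
    by (rule mulB[OF _ K s]) (use F H in simp)
  also have "\<dots> = ssum A (\<lambda>g. gadd A (gmul A (F g) (g (K (inv g \<circ> s)))) (gmul A (H g) (g (K (inv g \<circ> s))))) G"
    by (rule ssum_cong) (use F H K s in \<open>auto simp: CB_iff distr\<close>)
  also have "\<dots> = gadd A (ssum A (\<lambda>g. gmul A (F g) (g (K (inv g \<circ> s)))) G) (ssum A (\<lambda>g. gmul A (H g) (g (K (inv g \<circ> s)))) G)"
    by (rule ssum_add[OF addA]) (use F H K s in \<open>auto simp: CB_iff\<close>)
  also have "\<dots> = gadd B (gmul B F K) (gmul B H K) s"
    using s by (simp add: mulB[OF F K s] mulB[OF H K s])
  finally show "gmul B (gadd B F H) K s = gadd B (gmul B F K) (gmul B H K) s" .
qed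

lemma mulB_smul1:
  assumes F: "F \<in> gcarr B" and H: "H \<in> gcarr B"
  shows "gsmul B c (gmul B F H) = gmul B (gsmul B c F) H"
proof (rule CB_eq)
  show "gsmul B c (gmul B F H) \<in> gcarr B" "gmul B (gsmul B c F) H \<in> gcarr B"
    using F H by simp_all
  fix s assume s: "s \<in> G"
  have "gsmul B c (gmul B F H) s = gsmul A c (ssum A (\<lambda>g. gmul A (F g) (g (H (inv g \<circ> s)))) G)"
    using s by (simp add: mulB[OF F H s])
  also have "\<dots> = ssum A (\<lambda>g. gsmul A c (gmul A (F g) (g (H (inv g \<circ> s))))) G"
    by (rule ssum_smul) (use F H s in \<open>auto simp: CB_iff\<close>)
  also have "\<dots> = ssum A (\<lambda>g. gmul A (gsmul B c F g) (g (H (inv g \<circ> s)))) G"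
    by (rule ssum_cong) (use F H s in \<open>auto simp: CB_iff smul_mul\<close>)
  also have "\<dots> = gmul B (gsmul B c F) H s"
    by (rule mulB[symmetric]) (use F H s in simp_all)
  finally show "gsmul B c (gmul B F H) s = gmul B (gsmul B c F) H s" .
qed

lemma mulB_smul2:
  assumes F: "F \<in> gcarr B" and H: "H \<in> gcarr B"
  shows "gsmul B c (gmul B F H) = gmul B F (gsmul B c H)"
proof (rule CB_eq)
  show "gsmul B c (gmul B F H) \<in> gcarr B" "gmul B F (gsmul B c H) \<in> gcarr B"
    using F H by simp_all
  fix s assume s: "s \<in> G"
  have "gsmul B c (gmul B F H) s = gsmul A c (ssum A (\<lambda>g. gmul A (F g) (g (H (inv g \<circ> s)))) G)"
    using s by (simp add: mulB[OF F H s])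
  also have "\<dots> = ssum A (\<lambda>g. gsmul A c (gmul A (F g) (g (H (inv g \<circ> s))))) G"
    by (rule ssum_smul) (use F H s in \<open>auto simp: CB_iff\<close>)
  also have "\<dots> = ssum A (\<lambda>g. gmul A (F g) (g (gsmul B c H (inv g \<circ> s)))) G"
    by (rule ssum_cong) (use F H s in \<open>auto simp: CB_iff smul_mul2 aut_smul\<close>)
  also have "\<dots> = gmul B F (gsmul B c H) s"
    by (rule mulB[symmetric]) (use F H s in simp_all)
  finally show "gsmul B c (gmul B F H) s = gmul B F (gsmul B c H) s" .
qed

end



lemma lsum_Cons: "lsum A (x # xs) = gadd A x (lsum A xs)" and lsum_Nil: "lsum A [] = gzero A"
  by (simp_all add: lsum_def)

context skew begin

lemma lsum_B: "lsum B xs g = (if g \<in> G then lsum A (map (\<lambda>x. x g) xs) else gzero A)"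
  by (induction xs) (auto simp: lsum_Cons lsum_Nil B_app_out)

lemma lsum_closed: "(\<And>x. x \<in> set xs \<Longrightarrow> x \<in> gcarr A) \<Longrightarrow> lsum A xs \<in> gcarr A"
  by (induction xs) (auto simp: lsum_Cons lsum_Nil)

lemma lsum_zeros: "(\<And>x. x \<in> set xs \<Longrightarrow> x = gzero A) \<Longrightarrow> lsum A xs = gzero A"
proof (induction xs)
  case Nil then show ?case by (simp add: lsum_Nil)
next
  case (Cons a xs)
  have "a = gzero A" using Cons.prems by simp
  moreover have "lsum A xs = gzero A" using Cons by simp
  ultimately show ?case by (simp add: lsum_Cons)
qed

lemma lsum_append: "(\<And>x. x \<in> set ys \<Longrightarrow> x = gzero A) \<Longrightarrow> lsum A (xs @ ys) = lsum A xs"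
proof -
  assume z: "\<And>x. x \<in> set ys \<Longrightarrow> x = gzero A"
  have "lsum A (xs @ ys) = foldr (gadd A) xs (lsum A ys)" by (simp add: lsum_def)
  also have "lsum A ys = gzero A" using lsum_zeros z by blast
  finally show ?thesis by (simp add: lsum_def)
qed

lemma lsum_pad:
  assumes "M \<le> N" "\<And>n. n < M \<Longrightarrow> d n = c n" "\<And>n. M \<le> n \<Longrightarrow> n < N \<Longrightarrow> d n = gzero A"
  shows "lsum A (map d [0..<N]) = lsum A (map c [0..<M])"
proof -
  have "[0..<N] = [0..<M] @ [M..<N]" using assms(1) upt_add_eq_append[of 0 M "N - M"] by simp
  then have "lsum A (map d [0..<N]) = lsum A (map d [0..<M] @ map d [M..<N])" by simp
  also have "\<dots> = lsum A (map d [0..<M])" by (rule lsum_append) (use assms in auto)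
  also have "map d [0..<M] = map c [0..<M]" using assms(2) by simp
  finally show ?thesis .
qed

lemma pieceB_C: "F \<in> gpiece B n \<Longrightarrow> F \<in> gcarr B"
  using piece_sub by (auto simp: pieceB_iff CB_iff)

lemma decompB:
  assumes X: "X \<in> gcarr B"
  shows "\<exists>N c. (\<forall>n<N. c n \<in> gpiece B n) \<and> X = lsum B (map c [0..<N])"
proof -
  have "\<forall>g\<in>G. \<exists>N c. (\<forall>n<N. c n \<in> gpiece A n) \<and> X g = lsum A (map c [0..<N])"
    using X decomp by (auto simp: CB_iff)
  then obtain Nf cf where Nc: "\<And>g. g \<in> G \<Longrightarrow> (\<forall>n<Nf g. cf g n \<in> gpiece A n) \<and> X g = lsum A (map (cf g) [0..<Nf g])"
    by metis
  define N where "N = (\<Sum>g\<in>G. Nf g)"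
  define c where "c = (\<lambda>n g. if g \<in> G \<and> n < Nf g then cf g n else gzero A)"
  have le: "g \<in> G \<Longrightarrow> Nf g \<le> N" for g unfolding N_def using finG by (simp add: member_le_sum)
  have "\<forall>n<N. c n \<in> gpiece B n"
    using Nc by (auto simp: pieceB_iff c_def)
  moreover have "X = lsum B (map c [0..<N])"
  proof (rule ext)
    fix g show "X g = lsum B (map c [0..<N]) g"
    proof (cases "g \<in> G")
      case True
      have "lsum B (map c [0..<N]) g = lsum A (map (\<lambda>n. c n g) [0..<N])"
        using True by (simp add: lsum_B comp_def)
      also have "\<dots> = lsum A (map (cf g) [0..<Nf g])"
        by (rule lsum_pad) (use le[OF True] True in \<open>auto simp: c_def\<close>)
      finally show ?thesis using Nc[OF True] by simp
    next
      case False then show ?thesis using X by (simp add: lsum_B CB_iff)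
    qed
  qed
  ultimately show ?thesis by blast
qed

lemma uniqB:
  assumes c: "\<forall>n<N. c n \<in> gpiece B n" and z: "lsum B (map c [0..<N]) = gzero B" and n: "n < N"
  shows "c n = gzero B"
proof (rule ext)
  fix g show "c n g = gzero B g"
  proof (cases "g \<in> G")
    case True
    have "lsum A (map (\<lambda>m. c m g) [0..<N]) = gzero A"
      using fun_cong[OF z, of g] True by (simp add: lsum_B comp_def)
    then show ?thesis using uniq[of N "\<lambda>m. c m g" n] c n True by (auto simp: pieceB_iff)
  next
    case False then show ?thesis using c n by (auto simp: pieceB_iff)
  qed
qed

lemma pieceB_mul:
  assumes F: "F \<in> gpiece B i" and H: "H \<in> gpiece B j"
  shows "gmul B F H \<in> gpiece B (i + j)"
  unfolding pieceB_iff
proof (intro conjI ballI allI impI)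
  fix s assume s: "s \<in> G"
  have FC: "F \<in> gcarr B" and HC: "H \<in> gcarr B" using F H pieceB_C by auto
  show "gmul B F H s \<in> gpiece A (i + j)"
    unfolding mulB[OF FC HC s]
  proof (rule ssum_in_subset[OF addA piece_sub piece_0 piece_add])
    fix g assume g: "g \<in> G"
    have "F g \<in> gpiece A i" using F g by (simp add: pieceB_iff)
    moreover have "g (H (inv g \<circ> s)) \<in> gpiece A j"
      using H g s aut_piece by (simp add: pieceB_iff)
    ultimately show "gmul A (F g) (g (H (inv g \<circ> s))) \<in> gpiece A (i + j)" by (rule piece_mul)
  qed
qed (simp add: mulB_out)

lemma graded_B: "graded_algebra B"
  unfolding graded_algebra_def
proof (intro conjI)
  show "gzero B \<in> gcarr B" "gone B \<in> gcarr B" by simp_all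
  show "\<forall>x\<in>gcarr B. \<forall>y\<in>gcarr B. gadd B x y \<in> gcarr B \<and> gmul B x y \<in> gcarr B" by simp
  show "\<forall>c. \<forall>x\<in>gcarr B. gsmul B c x \<in> gcarr B" by simp
  show "\<forall>x\<in>gcarr B. \<forall>y\<in>gcarr B. \<forall>z\<in>gcarr B. gadd B (gadd B x y) z = gadd B x (gadd B y z)"
    "\<forall>x\<in>gcarr B. \<forall>y\<in>gcarr B. gadd B x y = gadd B y x"
    "\<forall>x\<in>gcarr B. gadd B (gzero B) x = x"
    "\<forall>x\<in>gcarr B. \<exists>y\<in>gcarr B. gadd B x y = gzero B"
    using addB unfolding addgrp_def by blast+
  show "\<forall>c. \<forall>x\<in>gcarr B. \<forall>y\<in>gcarr B. gsmul B c (gadd B x y) = gadd B (gsmul B c x) (gsmul B c y)"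
    by (intro allI ballI, rule CB_eq) (auto simp: CB_iff smul_add B_app_out)
  show "\<forall>c d. \<forall>x\<in>gcarr B. gsmul B (c + d) x = gadd B (gsmul B c x) (gsmul B d x)"
    by (intro allI ballI, rule CB_eq) (auto simp: CB_iff smul_add2 B_app_out)
  show "\<forall>c d. \<forall>x\<in>gcarr B. gsmul B c (gsmul B d x) = gsmul B (c * d) x"
    by (intro allI ballI, rule CB_eq) (auto simp: CB_iff smul_smul B_app_out)
  show "\<forall>x\<in>gcarr B. gsmul B 1 x = x"
    by (intro allI ballI, rule CB_eq) (auto simp: CB_iff B_app_out)
  show "\<forall>x\<in>gcarr B. \<forall>y\<in>gcarr B. \<forall>z\<in>gcarr B. gmul B (gmul B x y) z = gmul B x (gmul B y z)"
    using mulB_assoc by blast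
  show "\<forall>x\<in>gcarr B. gmul B (gone B) x = x \<and> gmul B x (gone B) = x"
    using mulB_1l mulB_1r by blast
  show "\<forall>x\<in>gcarr B. \<forall>y\<in>gcarr B. \<forall>z\<in>gcarr B.
        gmul B x (gadd B y z) = gadd B (gmul B x y) (gmul B x z) \<and>
        gmul B (gadd B x y) z = gadd B (gmul B x z) (gmul B y z)"
    using mulB_distl mulB_distr by blast
  show "\<forall>c. \<forall>x\<in>gcarr B. \<forall>y\<in>gcarr B. gsmul B c (gmul B x y) = gmul B (gsmul B c x) y \<and>
        gsmul B c (gmul B x y) = gmul B x (gsmul B c y)"
    using mulB_smul1 mulB_smul2 by blast
  show "\<forall>n. gpiece B n \<subseteq> gcarr B \<and> gzero B \<in> gpiece B n \<and>
         (\<forall>x\<in>gpiece B n. \<forall>y\<in>gpiece B n. gadd B x y \<in> gpiece B n) \<and>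
         (\<forall>c. \<forall>x\<in>gpiece B n. gsmul B c x \<in> gpiece B n)"
    using pieceB_C by (auto simp: pieceB_iff B_app_out piece_add piece_smul)
  show "\<forall>x\<in>gcarr B. \<exists>N c. (\<forall>n<N. c n \<in> gpiece B n) \<and> x = lsum B (map c [0..<N])"
    using decompB by blast
  show "\<forall>N c. (\<forall>n<N. c n \<in> gpiece B n) \<and> lsum B (map c [0..<N]) = gzero B \<longrightarrow> (\<forall>n<N. c n = gzero B)"
    using uniqB by blast
  show "gone B \<in> gpiece B 0"
    using one_piece by (auto simp: pieceB_iff)
  show "\<forall>i j. \<forall>x\<in>gpiece B i. \<forall>y\<in>gpiece B j. gmul B x y \<in> gpiece B (i + j)"
    using pieceB_mul by blast
qed

end



context skew begin

lemma foldr_addA: "(\<And>x. x \<in> set xs \<Longrightarrow> x \<in> gcarr A) \<Longrightarrow> y \<in> gcarr A \<Longrightarrow>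
   foldr (gadd A) xs y = gadd A (lsum A xs) y"
proof (induction xs)
  case Nil then show ?case by (simp add: lsum_def)
next
  case (Cons a xs)
  have c: "a \<in> gcarr A" "lsum A xs \<in> gcarr A" using Cons.prems lsum_closed by auto
  have "foldr (gadd A) (a # xs) y = gadd A a (gadd A (lsum A xs) y)" using Cons by simp
  also have "\<dots> = gadd A (lsum A (a # xs)) y" using c Cons.prems by (simp add: lsum_Cons add_assoc)
  finally show ?case .
qed

lemma lsum_app: "(\<And>x. x \<in> set xs \<Longrightarrow> x \<in> gcarr A) \<Longrightarrow> (\<And>x. x \<in> set ys \<Longrightarrow> x \<in> gcarr A) \<Longrightarrow>
   lsum A (xs @ ys) = gadd A (lsum A xs) (lsum A ys)"
  using foldr_addA[of xs "lsum A ys"] lsum_closed[of ys] by (simp add: lsum_def)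

definition del :: "('a \<Rightarrow> 'a) \<Rightarrow> 'a \<Rightarrow> ('a \<Rightarrow> 'a) \<Rightarrow> 'a" where
  "del h v = (\<lambda>g. if g = h then v else gzero A)"

lemma del_piece: "h \<in> G \<Longrightarrow> v \<in> gpiece A n \<Longrightarrow> del h v \<in> gpiece B n"
  by (auto simp: del_def pieceB_iff)

lemma eval_block:
  assumes g: "g \<in> G" and vs: "set vs \<subseteq> gcarr A" and len: "length cl = length vs"
  shows "lsum A (map (\<lambda>x. x g) (map2 (gsmul B) cl (map (del h) vs)))
       = (if g = h then lsum A (map2 (gsmul A) cl vs) else gzero A)"
proof -
  have "map (\<lambda>x. x g) (map2 (gsmul B) cl (map (del h) vs))
      = map2 (\<lambda>c v. if g = h then gsmul A c v else gzero A) cl vs"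
    using g by (auto simp: zip_map2 del_def split: prod.splits)
  then show ?thesis
    by (cases "g = h") (auto intro!: lsum_zeros simp: set_zip)
qed

lemma evalC:
  assumes w: "\<And>w. w \<in> set wl \<Longrightarrow> w \<in> gcarr B" and g: "g \<in> G"
    and x: "x \<in> set (map (\<lambda>x. x g) (map2 (gsmul B) cl wl))"
  shows "x \<in> gcarr A"
proof -
  obtain c w where p: "(c, w) \<in> set (zip cl wl)" and xe: "x = gsmul B c w g" using x by auto
  have "w \<in> set wl" using p by (rule set_zip_rightD)
  then have "gsmul B c w \<in> gcarr B" using w by simp
  then show ?thesis using xe g CB_in[of "gsmul B c w" g] by simp
qed

lemma delC: "h \<in> G \<Longrightarrow> v \<in> gcarr A \<Longrightarrow> del h v \<in> gcarr B"
  by (auto simp: del_def CB_iff)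

lemma blocks:
  assumes g: "g \<in> G" and vs: "set vs \<subseteq> gcarr A" and d: "distinct gl" and glG: "set gl \<subseteq> G"
    and len: "\<And>h. h \<in> set gl \<Longrightarrow> length (cs h) = length vs"
  shows "lsum A (map (\<lambda>x. x g) (map2 (gsmul B) (concat (map cs gl)) (concat (map (\<lambda>h. map (del h) vs) gl))))
       = (if g \<in> set gl then lsum A (map2 (gsmul A) (cs g) vs) else gzero A)"
  using d len glG
proof (induction gl)
  case Nil then show ?case by (simp add: lsum_Nil)
next
  case (Cons h rest)
  have lh: "length (cs h) = length (map (del h) vs)" using Cons.prems by simp
  have cC: "x \<in> gcarr A" if x: "x \<in> set (map2 (gsmul A) cl vs)" for cl x
  proof -
    obtain c v where p: "(c, v) \<in> set (zip cl vs)" and xe: "x = gsmul A c v" using x by auto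
    have "v \<in> set vs" using p by (rule set_zip_rightD)
    then show ?thesis using vs xe by auto
  qed
  have hG: "h \<in> G" using Cons.prems by simp
  have Cblk: "\<And>x. x \<in> set (map (\<lambda>x. x g) (map2 (gsmul B) cl (map (del h) vs))) \<Longrightarrow> x \<in> gcarr A" for cl
    by (rule evalC[OF _ g]) (use vs delC hG in auto)
  have Crest: "\<And>x. x \<in> set (map (\<lambda>x. x g) (map2 (gsmul B) (concat (map cs rest)) (concat (map (\<lambda>h. map (del h) vs) rest)))) \<Longrightarrow> x \<in> gcarr A"
    by (rule evalC[OF _ g]) (use vs Cons.prems in \<open>auto intro!: delC\<close>)
  have "lsum A (map (\<lambda>x. x g) (map2 (gsmul B) (concat (map cs (h # rest))) (concat (map (\<lambda>h. map (del h) vs) (h # rest)))))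
      = lsum A (map (\<lambda>x. x g) (map2 (gsmul B) (cs h) (map (del h) vs)) @
                map (\<lambda>x. x g) (map2 (gsmul B) (concat (map cs rest)) (concat (map (\<lambda>h. map (del h) vs) rest))))"
    using lh by (simp add: zip_append)
  also have "\<dots> = gadd A (lsum A (map (\<lambda>x. x g) (map2 (gsmul B) (cs h) (map (del h) vs))))
       (lsum A (map (\<lambda>x. x g) (map2 (gsmul B) (concat (map cs rest)) (concat (map (\<lambda>h. map (del h) vs) rest)))))"
    by (rule lsum_app) (use Cblk Crest in blast)+
  also have "\<dots> = gadd A (if g = h then lsum A (map2 (gsmul A) (cs h) vs) else gzero A)
                         (if g \<in> set rest then lsum A (map2 (gsmul A) (cs g) vs) else gzero A)"
    using eval_block[OF g vs, of "cs h" h] Cons by simp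
  also have "\<dots> = (if g \<in> set (h # rest) then lsum A (map2 (gsmul A) (cs g) vs) else gzero A)"
  proof -
    have c: "lsum A (map2 (gsmul A) (cs g) vs) \<in> gcarr A" by (rule lsum_closed) (rule cC)
    show ?thesis
    proof (cases "g = h")
      case True
      then have "g \<notin> set rest" using Cons.prems(1) by simp
      then show ?thesis using True c by simp
    next
      case False
      then show ?thesis using c by simp
    qed
  qed
  finally show ?case .
qed

lemma lfB:
  assumes lf: "locally_finite A"
  shows "locally_finite B"
  unfolding locally_finite_def fin_dim_def
proof
  fix n
  obtain vs where vs: "set vs \<subseteq> gpiece A n"
    and sp: "\<And>x. x \<in> gpiece A n \<Longrightarrow> \<exists>cs. length cs = length vs \<and> x = lsum A (map2 (gsmul A) cs vs)"
    using lf unfolding locally_finite_def fin_dim_def by blast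
  have vsC: "set vs \<subseteq> gcarr A" using vs piece_sub by blast
  obtain gl where gl: "set gl = G" "distinct gl" using finite_distinct_list[OF finG] by blast
  define ws where "ws = concat (map (\<lambda>h. map (del h) vs) gl)"
  have "set ws \<subseteq> gpiece B n" using vs gl del_piece by (auto simp: ws_def)
  moreover have "\<exists>cs. length cs = length ws \<and> X = lsum B (map2 (gsmul B) cs ws)" if X: "X \<in> gpiece B n" for X
  proof -
    have "\<forall>h\<in>G. \<exists>cs. length cs = length vs \<and> X h = lsum A (map2 (gsmul A) cs vs)"
      using X sp by (auto simp: pieceB_iff)
    then obtain cs where cs: "\<And>h. h \<in> G \<Longrightarrow> length (cs h) = length vs \<and> X h = lsum A (map2 (gsmul A) (cs h) vs)"
      by metis
    define ccs where "ccs = concat (map cs gl)"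
    have "length ccs = length ws"
      unfolding ccs_def ws_def length_concat map_map
      by (rule arg_cong[where f=sum_list], rule map_cong) (use cs gl in auto)
    moreover have "X = lsum B (map2 (gsmul B) ccs ws)"
    proof (rule ext)
      fix g show "X g = lsum B (map2 (gsmul B) ccs ws) g"
      proof (cases "g \<in> G")
        case True
        have "lsum B (map2 (gsmul B) ccs ws) g = lsum A (map (\<lambda>x. x g) (map2 (gsmul B) ccs ws))"
          using True by (simp add: lsum_B)
        also have "\<dots> = lsum A (map2 (gsmul A) (cs g) vs)"
          unfolding ccs_def ws_def using blocks[OF True vsC gl(2), of cs] gl(1) cs gl True by simp
        finally show ?thesis using cs[OF True] by simp
      next
        case False then show ?thesis using X by (simp add: lsum_B pieceB_iff)
      qed
    qed
    ultimately show ?thesis by blast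
  qed
  ultimately show "\<exists>vs. set vs \<subseteq> gpiece B n \<and>
      (\<forall>x\<in>gpiece B n. \<exists>cs. length cs = length vs \<and> x = lsum B (map2 (gsmul B) cs vs))" by blast
qed

end



locale frob = skew A G for A :: "('k::field, 'a) gr_alg" and G +
  fixes l :: int and \<phi> :: "('a \<Rightarrow> 'k) \<Rightarrow> 'a"
  assumes lf: "locally_finite A"
    and phi_bij: "bij_betw \<phi> (gdual A) (gcarr A)"
    and phi_add: "\<And>f g. f \<in> gdual A \<Longrightarrow> g \<in> gdual A \<Longrightarrow> \<phi> (\<lambda>x. f x + g x) = gadd A (\<phi> f) (\<phi> g)"
    and phi_mod: "\<And>f b. f \<in> gdual A \<Longrightarrow> b \<in> gcarr A \<Longrightarrow> \<phi> (dual_ract A f b) = gmul A (\<phi> f) b"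
    and phi_deg: "\<And>i. \<phi> ` gdual_piece A i = shift_piece A l i"
begin

lemma sum_list_zeros: "(\<And>n. n < N \<Longrightarrow> g n = (0::'k)) \<Longrightarrow> sum_list (map g [0..<N]) = 0"
  by (induction N) auto

lemma phiC: "f \<in> gdual A \<Longrightarrow> \<phi> f \<in> gcarr A"
  using phi_bij bij_betwE by blast

lemma phi_inj: "f \<in> gdual A \<Longrightarrow> g \<in> gdual A \<Longrightarrow> \<phi> f = \<phi> g \<Longrightarrow> f = g"
  using phi_bij by (metis bij_betw_imp_inj_on inj_onD)

lemma zero_gdual: "(\<lambda>x. 0) \<in> gdual A"
  by (auto simp: gdual_def)

lemma phi_zero: "\<phi> (\<lambda>x. 0) = gzero A"
proof -
  have "\<phi> (\<lambda>x. (\<lambda>x. 0) x + (\<lambda>x. 0) x) = gadd A (\<phi> (\<lambda>x. 0)) (\<phi> (\<lambda>x. 0))"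
    by (rule phi_add) (rule zero_gdual)+
  then have "gadd A (\<phi> (\<lambda>x. 0)) (\<phi> (\<lambda>x. 0)) = \<phi> (\<lambda>x. 0)" by simp
  then show ?thesis using addgrp_cancel2[OF addA phiC[OF zero_gdual]] by simp
qed

lemma lin_lsum:
  assumes a: "\<And>x y. x \<in> gcarr A \<Longrightarrow> y \<in> gcarr A \<Longrightarrow> f (gadd A x y) = f x + (f y :: 'k)"
  shows "(\<And>x. x \<in> set xs \<Longrightarrow> x \<in> gcarr A) \<Longrightarrow> f (lsum A xs) = sum_list (map f xs)"
proof (induction xs)
  case Nil then show ?case using lin_0[OF a] by (simp add: lsum_Nil)
next
  case (Cons x xs)
  have "lsum A xs \<in> gcarr A" using Cons.prems lsum_closed by simp
  then show ?case using Cons a by (simp add: lsum_Cons)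
qed

lemma hi_zero:
  assumes n: "int n > l" and x: "x \<in> gpiece A n"
  shows "x = gzero A"
proof -
  define i where "i = int n - l"
  have ip: "i > 0" using n by (simp add: i_def)
  have sp: "shift_piece A l i = gpiece A n" using n by (simp add: shift_piece_def i_def)
  have "gdual_piece A i \<subseteq> {\<lambda>x. 0}"
  proof
    fix f assume f: "f \<in> gdual_piece A i"
    then have fd: "f \<in> gdual A" and van: "\<And>m y. y \<in> gpiece A m \<Longrightarrow> f y = 0"
      using ip by (auto simp: gdual_piece_def)
    have add: "\<And>x y. x \<in> gcarr A \<Longrightarrow> y \<in> gcarr A \<Longrightarrow> f (gadd A x y) = f x + f y"
      using fd by (auto simp: gdual_def)
    have "f y = 0" for y
    proof (cases "y \<in> gcarr A")
      case True
      then obtain N c where c: "\<forall>n<N. c n \<in> gpiece A n" "y = lsum A (map c [0..<N])"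
        using decomp by blast
      have "f y = sum_list (map f (map c [0..<N]))"
        unfolding c(2) by (rule lin_lsum[OF add]) (use c(1) pieceC in auto)
      also have "\<dots> = 0" unfolding map_map by (rule sum_list_zeros) (use c(1) van in auto)
      finally show ?thesis .
    next
      case False then show ?thesis using fd by (auto simp: gdual_def)
    qed
    then show "f \<in> {\<lambda>x. 0}" by auto
  qed
  then have "\<phi> ` gdual_piece A i \<subseteq> {gzero A}" using phi_zero by auto
  then show ?thesis using x sp phi_deg[of i] by auto
qed

lemma gdual_I:
  assumes add: "\<And>x y. x \<in> gcarr A \<Longrightarrow> y \<in> gcarr A \<Longrightarrow> f (gadd A x y) = f x + f y"
    and sm: "\<And>c x. x \<in> gcarr A \<Longrightarrow> f (gsmul A c x) = c * f x"
    and out: "\<And>x. x \<notin> gcarr A \<Longrightarrow> f x = 0"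
  shows "f \<in> gdual A"
  unfolding gdual_def
proof (intro CollectI conjI allI ballI impI)
  show "\<exists>N. \<forall>n\<ge>N. \<forall>x\<in>gpiece A n. f x = 0"
  proof (intro exI allI impI ballI)
    fix n x assume nl: "nat (l + 1) \<le> n" and x: "x \<in> gpiece A n"
    have "l + 1 \<le> int n" using nl by (simp add: nat_le_iff)
    then have "l < int n" by simp
    then have "x = gzero A" using hi_zero x by blast
    then show "f x = 0" using lin_0[OF add] by simp
  qed
qed (use assms in auto)

definition lam :: "'a \<Rightarrow> 'k" where "lam = inv_into (gdual A) \<phi> (gone A)"

lemma lam_gdual: "lam \<in> gdual A" and phi_lam: "\<phi> lam = gone A"
  unfolding lam_def using phi_bij
  by (metis bij_betw_def inv_into_into oneC) (metis bij_betw_def f_inv_into_f oneC phi_bij)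

lemma lam_add: "x \<in> gcarr A \<Longrightarrow> y \<in> gcarr A \<Longrightarrow> lam (gadd A x y) = lam x + lam y"
  and lam_smul: "x \<in> gcarr A \<Longrightarrow> lam (gsmul A c x) = c * lam x"
  and lam_out: "x \<notin> gcarr A \<Longrightarrow> lam x = 0"
  using lam_gdual by (auto simp: gdual_def)

lemma lam_0[simp]: "lam (gzero A) = 0"
  using lin_0[OF lam_add] .

definition rho :: "'a \<Rightarrow> 'a \<Rightarrow> 'k" where "rho b = dual_ract A lam b"

lemma rho_app: "rho b x = (if x \<in> gcarr A then lam (gmul A b x) else 0)"
  by (simp add: rho_def dual_ract_def)

lemma rho_gdual: assumes b: "b \<in> gcarr A" shows "rho b \<in> gdual A"
  by (rule gdual_I) (use b in \<open>auto simp: rho_app distl lam_add smul_mul2[symmetric] lam_smul\<close>)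

lemma phi_rho: "b \<in> gcarr A \<Longrightarrow> \<phi> (rho b) = b"
  unfolding rho_def using phi_mod[OF lam_gdual] phi_lam by simp

lemma rho_phi: "f \<in> gdual A \<Longrightarrow> rho (\<phi> f) = f"
  by (rule phi_inj) (auto simp: rho_gdual phiC phi_rho)

lemma rho_inj:
  assumes b: "b \<in> gcarr A" "b' \<in> gcarr A" and e: "\<And>x. x \<in> gcarr A \<Longrightarrow> lam (gmul A b x) = lam (gmul A b' x)"
  shows "b = b'"
proof -
  have "rho b = rho b'" using e by (auto simp: rho_app)
  then show ?thesis using phi_rho b by metis
qed

lemma lam_piece: "lam \<in> gdual_piece A (- l)"
proof -
  have "gone A \<in> shift_piece A l (- l)" using one_piece by (simp add: shift_piece_def)
  then obtain f where f: "f \<in> gdual_piece A (- l)" "\<phi> f = gone A" using phi_deg[of "- l"] by (metis imageE)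
  have "f \<in> gdual A" using f by (simp add: gdual_piece_def)
  then have "f = lam" using f phi_lam lam_gdual phi_inj by metis
  then show ?thesis using f by simp
qed

lemma lam_van: "int m \<noteq> l \<Longrightarrow> y \<in> gpiece A m \<Longrightarrow> lam y = 0"
  using lam_piece by (auto simp: gdual_piece_def)

lemma rho_deg: "b \<in> gcarr A \<Longrightarrow> rho b \<in> gdual_piece A i \<Longrightarrow> b \<in> shift_piece A l i"
  using phi_rho phi_deg by (metis imageI)

end



context frob begin

definition Lam :: "(('a \<Rightarrow> 'a) \<Rightarrow> 'a) \<Rightarrow> 'k" where
  "Lam X = (if X \<in> gcarr B then lam (X id) else 0)"

definition psi :: "(('a \<Rightarrow> 'a) \<Rightarrow> 'a) \<Rightarrow> (('a \<Rightarrow> 'a) \<Rightarrow> 'a) \<Rightarrow> 'k" where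
  "psi F = dual_ract B Lam F"

lemma psi_app: "F \<in> gcarr B \<Longrightarrow> psi F X = (if X \<in> gcarr B then lam (gmul B F X id) else 0)"
  by (simp add: psi_def dual_ract_def Lam_def)

lemma mulB_0r: assumes F: "F \<in> gcarr B" shows "gmul B F (gzero B) = gzero B"
proof (rule addgrp_cancel2[OF addB])
  show "gmul B F (gzero B) \<in> gcarr B" using F by simp
  have "gadd B (gzero B) (gzero B) = gzero B" using addgrp_facts[OF addB] by simp
  then show "gadd B (gmul B F (gzero B)) (gmul B F (gzero B)) = gmul B F (gzero B)"
    using mulB_distl[OF F zeroB_C zeroB_C] by simp
qed

lemma mulB_0l: assumes F: "F \<in> gcarr B" shows "gmul B (gzero B) F = gzero B"
proof (rule addgrp_cancel2[OF addB])
  show "gmul B (gzero B) F \<in> gcarr B" using F by simp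
  have "gadd B (gzero B) (gzero B) = gzero B" using addgrp_facts[OF addB] by simp
  then show "gadd B (gmul B (gzero B) F) (gmul B (gzero B) F) = gmul B (gzero B) F"
    using mulB_distr[OF zeroB_C zeroB_C F] by simp
qed

lemma hi_zeroB: assumes "l < int n" "X \<in> gpiece B n" shows "X = gzero B"
proof (rule CB_eq)
  show "X \<in> gcarr B" using assms pieceB_C by blast
  show "gzero B \<in> gcarr B" by simp
  fix g assume "g \<in> G" then show "X g = gzero B g" using assms hi_zero by (simp add: pieceB_iff)
qed

lemma gdual_B_I:
  assumes add: "\<And>x y. x \<in> gcarr B \<Longrightarrow> y \<in> gcarr B \<Longrightarrow> f (gadd B x y) = f x + f y"
    and sm: "\<And>c x. x \<in> gcarr B \<Longrightarrow> f (gsmul B c x) = c * f x"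
    and out: "\<And>x. x \<notin> gcarr B \<Longrightarrow> f x = 0"
  shows "f \<in> gdual B"
  unfolding gdual_def
proof (intro CollectI conjI allI ballI impI)
  have f0: "f (gzero B) = 0"
  proof -
    have "f (gzero B) = f (gadd B (gzero B) (gzero B))" using addgrp_facts[OF addB] by simp
    also have "\<dots> = f (gzero B) + f (gzero B)" using add by simp
    finally show ?thesis by (metis add_cancel_right_right)
  qed
  show "\<exists>N. \<forall>n\<ge>N. \<forall>x\<in>gpiece B n. f x = 0"
  proof (intro exI allI impI ballI)
    fix n x assume nl: "nat (l + 1) \<le> n" and x: "x \<in> gpiece B n"
    have "l + 1 \<le> int n" using nl by (simp add: nat_le_iff)
    then have "l < int n" by simp
    then have "x = gzero B" using hi_zeroB x by blast
    then show "f x = 0" using f0 by simp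
  qed
qed (use assms in auto)

lemma psi_gdual: assumes F: "F \<in> gcarr B" shows "psi F \<in> gdual B"
proof (rule gdual_B_I)
  fix x y assume x: "x \<in> gcarr B" and y: "y \<in> gcarr B"
  show "psi F (gadd B x y) = psi F x + psi F y"
    using F x y by (simp add: psi_app mulB_distl lam_add CB_in)
next
  fix c x assume x: "x \<in> gcarr B"
  show "psi F (gsmul B c x) = c * psi F x"
    using F x by (simp add: psi_app mulB_smul2[symmetric] lam_smul CB_in)
next
  fix x assume "x \<notin> gcarr B" then show "psi F x = 0" using F by (simp add: psi_app)
qed

lemma mul_del:
  assumes F: "F \<in> gcarr B" and h: "h \<in> G" and a: "a \<in> gcarr A"
  shows "gmul B F (del h a) id = gmul A (F (inv h)) (inv h a)"
proof -
  have "gmul B F (del h a) id = ssum A (\<lambda>g. gmul A (F g) (g (del h a (inv g \<circ> id)))) G"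
    by (rule mulB[OF F delC[OF h a] idG])
  also have "\<dots> = gmul A (F (inv h)) (inv h (del h a (inv (inv h) \<circ> id)))"
  proof (rule ssum_single[OF addA finG])
    show "inv h \<in> G" using h by simp
    show "gmul A (F (inv h)) (inv h (del h a (inv (inv h) \<circ> id))) \<in> gcarr A"
      using F h a by (simp add: del_def CB_in)
    fix g assume g: "g \<in> G" "g \<noteq> inv h"
    have "inv g \<noteq> h" using g by (metis inv_invG)
    then show "gmul A (F g) (g (del h a (inv g \<circ> id))) = gzero A"
      using g F by (simp add: del_def CB_in)
  qed
  also have "\<dots> = gmul A (F (inv h)) (inv h a)" using h by (simp add: del_def)
  finally show ?thesis .
qed

lemma psi_del:
  assumes F: "F \<in> gcarr B" and u: "u \<in> G" and y: "y \<in> gcarr A"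
  shows "psi F (del (inv u) (inv u y)) = lam (gmul A (F u) y)"
proof -
  have iu: "inv u \<in> G" "inv u y \<in> gcarr A" using u y by auto
  have "psi F (del (inv u) (inv u y)) = lam (gmul B F (del (inv u) (inv u y)) id)"
    using F delC[OF iu] by (simp add: psi_app)
  also have "\<dots> = lam (gmul A (F u) y)" using mul_del[OF F iu] u by simp
  finally show ?thesis .
qed

lemma expandB:
  assumes X: "X \<in> gcarr B" shows "X = ssum B (\<lambda>h. del h (X h)) G"
proof (rule CB_eq[OF X])
  show "ssum B (\<lambda>h. del h (X h)) G \<in> gcarr B"
    by (rule ssum_closed[OF addB]) (use X CB_in in \<open>auto intro!: delC\<close>)
  fix s assume s: "s \<in> G"
  have "ssum B (\<lambda>h. del h (X h)) G s = ssum A (\<lambda>h. del h (X h) s) G"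
    by (rule evalB) (use X s CB_in in \<open>auto intro!: delC\<close>)
  also have "\<dots> = del s (X s) s"
    by (rule ssum_single[OF addA finG s]) (use X s in \<open>auto simp: del_def CB_iff\<close>)
  finally show "X s = ssum B (\<lambda>h. del h (X h)) G s" by (simp add: del_def)
qed

lemma gdualB_expand:
  assumes f: "f \<in> gdual B" and X: "X \<in> gcarr B"
  shows "f X = (\<Sum>h\<in>G. f (del h (X h)))"
proof -
  have add: "\<And>x y. x \<in> gcarr B \<Longrightarrow> y \<in> gcarr B \<Longrightarrow> f (gadd B x y) = f x + f y"
    using f by (simp add: gdual_def)
  have f0: "f (gzero B) = 0"
  proof -
    have "f (gzero B) = f (gadd B (gzero B) (gzero B))" using addgrp_facts[OF addB] by simp
    also have "\<dots> = f (gzero B) + f (gzero B)" using add by simp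
    finally show ?thesis by (metis add_cancel_right_right)
  qed
  have "f X = f (ssum B (\<lambda>h. del h (X h)) G)" using expandB[OF X] by simp
  also have "\<dots> = (\<Sum>h\<in>G. f (del h (X h)))"
    by (rule ssum_lin[OF addB, where h=f]) (use X CB_in add f0 in \<open>auto intro!: delC\<close>)
  finally show ?thesis .
qed

lemma psi_inj:
  assumes F: "F \<in> gcarr B" and H: "H \<in> gcarr B" and e: "psi F = psi H"
  shows "F = H"
proof (rule CB_eq[OF F H])
  fix u assume u: "u \<in> G"
  show "F u = H u"
  proof (rule rho_inj)
    show "F u \<in> gcarr A" "H u \<in> gcarr A" using F H u by (auto simp: CB_iff)
    fix y assume y: "y \<in> gcarr A"
    show "lam (gmul A (F u) y) = lam (gmul A (H u) y)"
      using psi_del[OF F u y] psi_del[OF H u y] e by simp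
  qed
qed

lemma del_add: "h \<in> G \<Longrightarrow> a \<in> gcarr A \<Longrightarrow> b \<in> gcarr A \<Longrightarrow> del h (gadd A a b) = gadd B (del h a) (del h b)"
proof (rule ext)
  fix x assume "h \<in> G" "a \<in> gcarr A" "b \<in> gcarr A"
  then show "del h (gadd A a b) x = gadd B (del h a) (del h b) x"
    by (cases "x \<in> G") (auto simp: del_def B_app_out)
qed

lemma del_smul: "h \<in> G \<Longrightarrow> del h (gsmul A c a) = gsmul B c (del h a)"
proof (rule ext)
  fix x assume "h \<in> G"
  then show "del h (gsmul A c a) x = gsmul B c (del h a) x"
    by (cases "x \<in> G") (auto simp: del_def B_app_out)
qed

lemma psi_surj:
  assumes f: "f \<in> gdual B" shows "\<exists>F\<in>gcarr B. psi F = f"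
proof -
  have fadd: "\<And>x y. x \<in> gcarr B \<Longrightarrow> y \<in> gcarr B \<Longrightarrow> f (gadd B x y) = f x + f y"
    and fsm: "\<And>c x. x \<in> gcarr B \<Longrightarrow> f (gsmul B c x) = c * f x"
    and fout: "\<And>x. x \<notin> gcarr B \<Longrightarrow> f x = 0"
    using f by (auto simp: gdual_def)
  define t where "t = (\<lambda>u y. if y \<in> gcarr A then f (del (inv u) (inv u y)) else 0)"
  have tg: "t u \<in> gdual A" if u: "u \<in> G" for u
  proof (rule gdual_I)
    fix x y assume x: "x \<in> gcarr A" and y: "y \<in> gcarr A"
    show "t u (gadd A x y) = t u x + t u y"
      using u x y by (simp add: t_def aut_add del_add fadd delC)
  next
    fix c x assume x: "x \<in> gcarr A"
    show "t u (gsmul A c x) = c * t u x"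
      using u x by (simp add: t_def aut_smul del_smul fsm delC)
  qed (simp add: t_def)
  define F where "F = (\<lambda>u. if u \<in> G then \<phi> (t u) else gzero A)"
  have FC: "F \<in> gcarr B" using tg phiC by (auto simp: F_def CB_iff)
  have rF: "\<And>u. u \<in> G \<Longrightarrow> rho (F u) = t u" using tg rho_phi by (simp add: F_def)
  have "psi F = f"
  proof
    fix X show "psi F X = f X"
    proof (cases "X \<in> gcarr B")
      case True
      have "psi F X = (\<Sum>h\<in>G. psi F (del h (X h)))" by (rule gdualB_expand[OF psi_gdual[OF FC] True])
      also have "\<dots> = (\<Sum>h\<in>G. f (del h (X h)))"
      proof (rule sum.cong[OF refl])
        fix h assume h: "h \<in> G"
        have a: "X h \<in> gcarr A" using True h by (simp add: CB_iff)
        have "psi F (del h (X h)) = psi F (del (inv (inv h)) (inv (inv h) (inv h (X h))))" using h by simp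
        also have "\<dots> = lam (gmul A (F (inv h)) (inv h (X h)))"
          by (rule psi_del[OF FC]) (use h a in auto)
        also have "\<dots> = rho (F (inv h)) (inv h (X h))" using h a by (simp add: rho_app)
        also have "\<dots> = t (inv h) (inv h (X h))" using h rF by simp
        also have "\<dots> = f (del h (X h))" using h a by (simp add: t_def)
        finally show "psi F (del h (X h)) = f (del h (X h))" .
      qed
      also have "\<dots> = f X" by (rule gdualB_expand[OF f True, symmetric])
      finally show ?thesis .
    next
      case False then show ?thesis using FC fout by (simp add: psi_app)
    qed
  qed
  then show ?thesis using FC by blast
qed

end



context frob begin

lemma shiftB_C: "shift_piece B l i \<subseteq> gcarr B"
  using pieceB_C by (auto simp: shift_piece_def)

lemma psi_deg: "psi ` shift_piece B l i = gdual_piece B i"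
proof
  show "psi ` shift_piece B l i \<subseteq> gdual_piece B i"
  proof
    fix f assume "f \<in> psi ` shift_piece B l i"
    then obtain F where F: "F \<in> shift_piece B l i" and fe: "f = psi F" by blast
    have FC: "F \<in> gcarr B" using F shiftB_C by blast
    have van: "psi F X = 0" if n: "int n \<noteq> - i" and X: "X \<in> gpiece B n" for n X
    proof (cases "0 \<le> l + i")
      case True
      then have Fp: "F \<in> gpiece B (nat (l + i))" using F by (simp add: shift_piece_def)
      have XC: "X \<in> gcarr B" using X pieceB_C by blast
      have "gmul B F X \<in> gpiece B (nat (l + i) + n)" by (rule pieceB_mul[OF Fp X])
      then have "gmul B F X id \<in> gpiece A (nat (l + i) + n)" by (simp add: pieceB_iff)
      moreover have "int (nat (l + i) + n) \<noteq> l" using True n by simp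
      ultimately have "lam (gmul B F X id) = 0" using lam_van by blast
      then show ?thesis using FC XC by (simp add: psi_app)
    next
      case False
      then have "F = gzero B" using F by (simp add: shift_piece_def)
      then show ?thesis using FC mulB_0l by (simp add: psi_app)
    qed
    show "f \<in> gdual_piece B i"
      unfolding gdual_piece_def fe using psi_gdual[OF FC] van by blast
  qed
next
  show "gdual_piece B i \<subseteq> psi ` shift_piece B l i"
  proof
    fix f assume f: "f \<in> gdual_piece B i"
    then have fd: "f \<in> gdual B" and fv: "\<And>n X. int n \<noteq> - i \<Longrightarrow> X \<in> gpiece B n \<Longrightarrow> f X = 0"
      by (auto simp: gdual_piece_def)
    obtain F where FC: "F \<in> gcarr B" and fe: "psi F = f" using psi_surj[OF fd] by blast
    have Fs: "F u \<in> shift_piece A l i" if u: "u \<in> G" for u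
    proof (rule rho_deg)
      show Fu: "F u \<in> gcarr A" using FC u by (simp add: CB_iff)
      show "rho (F u) \<in> gdual_piece A i"
        unfolding gdual_piece_def
      proof (intro CollectI conjI allI impI ballI)
        show "rho (F u) \<in> gdual A" by (rule rho_gdual[OF Fu])
        fix m y assume m: "int m \<noteq> - i" and y: "y \<in> gpiece A m"
        have yC: "y \<in> gcarr A" using y pieceC by blast
        have "rho (F u) y = lam (gmul A (F u) y)" using yC by (simp add: rho_app)
        also have "\<dots> = psi F (del (inv u) (inv u y))" using psi_del[OF FC u yC] by simp
        also have "\<dots> = 0" unfolding fe
          by (rule fv[OF m]) (rule del_piece, use u y aut_piece in auto)
        finally show "rho (F u) y = 0" .
      qed
    qed
    have "F \<in> shift_piece B l i"
    proof (cases "0 \<le> l + i")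
      case True
      then show ?thesis using Fs FC by (auto simp: shift_piece_def pieceB_iff CB_iff)
    next
      case False
      have "F = gzero B"
      proof (rule CB_eq[OF FC zeroB_C])
        fix g assume "g \<in> G" then show "F g = gzero B g" using Fs False by (simp add: shift_piece_def)
      qed
      then show ?thesis using False by (simp add: shift_piece_def)
    qed
    then show "f \<in> psi ` shift_piece B l i" using fe by blast
  qed
qed

lemma psi_bij: "bij_betw psi (gcarr B) (gdual B)"
  unfolding bij_betw_def
proof
  show "inj_on psi (gcarr B)" using psi_inj by (meson inj_onI)
  show "psi ` gcarr B = gdual B" using psi_gdual psi_surj by blast
qed

lemma psi_add: "F \<in> gcarr B \<Longrightarrow> H \<in> gcarr B \<Longrightarrow> psi (gadd B F H) = (\<lambda>X. psi F X + psi H X)"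
proof (rule ext)
  fix X assume F: "F \<in> gcarr B" and H: "H \<in> gcarr B"
  show "psi (gadd B F H) X = psi F X + psi H X"
  proof (cases "X \<in> gcarr B")
    case True
    then show ?thesis using F H
      by (simp add: psi_app mulB_distr lam_add CB_in)
  next
    case False then show ?thesis using F H by (simp add: psi_app)
  qed
qed

lemma psi_smul: "F \<in> gcarr B \<Longrightarrow> psi (gsmul B c F) = (\<lambda>X. c * psi F X)"
proof (rule ext)
  fix X assume F: "F \<in> gcarr B"
  show "psi (gsmul B c F) X = c * psi F X"
  proof (cases "X \<in> gcarr B")
    case True
    then show ?thesis using F
      by (simp add: psi_app mulB_smul1[symmetric] lam_smul CB_in)
  next
    case False then show ?thesis using F by (simp add: psi_app)
  qed
qed

lemma psi_mod: "F \<in> gcarr B \<Longrightarrow> b \<in> gcarr B \<Longrightarrow> dual_ract B (psi F) b = psi (gmul B F b)"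
proof (rule ext)
  fix X assume F: "F \<in> gcarr B" and b: "b \<in> gcarr B"
  show "dual_ract B (psi F) b X = psi (gmul B F b) X"
    using F b by (simp add: dual_ract_def psi_app mulB_assoc)
qed

lemma frob_B: "graded_frobenius B l"
  unfolding graded_frobenius_def
proof (intro conjI)
  show "graded_algebra B" by (rule graded_B)
  show "locally_finite B" by (rule lfB[OF lf])
  define \<phi>' where "\<phi>' = inv_into (gcarr B) psi"
  have bij: "bij_betw \<phi>' (gdual B) (gcarr B)" unfolding \<phi>'_def by (rule bij_betw_inv_into[OF psi_bij])
  have inj: "inj_on psi (gcarr B)" using psi_bij by (rule bij_betw_imp_inj_on)
  have img: "psi ` gcarr B = gdual B" using psi_bij by (rule bij_betw_imp_surj_on)
  have pp: "\<And>F. F \<in> gcarr B \<Longrightarrow> \<phi>' (psi F) = F" unfolding \<phi>'_def by (rule inv_into_f_f[OF inj])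
  have pp2: "\<And>f. f \<in> gdual B \<Longrightarrow> psi (\<phi>' f) = f" unfolding \<phi>'_def using img f_inv_into_f[of _ psi "gcarr B"] by blast
  have pC: "\<And>f. f \<in> gdual B \<Longrightarrow> \<phi>' f \<in> gcarr B" using bij_betwE[OF bij] by blast
  show "\<exists>\<phi>. bij_betw \<phi> (gdual B) (gcarr B) \<and>
        (\<forall>f\<in>gdual B. \<forall>g\<in>gdual B. \<phi> (\<lambda>x. f x + g x) = gadd B (\<phi> f) (\<phi> g)) \<and>
        (\<forall>c. \<forall>f\<in>gdual B. \<phi> (\<lambda>x. c * f x) = gsmul B c (\<phi> f)) \<and>
        (\<forall>f\<in>gdual B. \<forall>b\<in>gcarr B. \<phi> (dual_ract B f b) = gmul B (\<phi> f) b) \<and>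
        (\<forall>i. \<phi> ` gdual_piece B i = shift_piece B l i)"
  proof (intro exI conjI allI ballI)
    show "bij_betw \<phi>' (gdual B) (gcarr B)" by (rule bij)
    fix f assume f: "f \<in> gdual B"
    {
      fix g assume g: "g \<in> gdual B"
      have e: "(\<lambda>x. f x + g x) = psi (gadd B (\<phi>' f) (\<phi>' g))"
      proof -
        have "psi (gadd B (\<phi>' f) (\<phi>' g)) = (\<lambda>X. psi (\<phi>' f) X + psi (\<phi>' g) X)"
          by (rule psi_add[OF pC[OF f] pC[OF g]])
        then show ?thesis unfolding pp2[OF f] pp2[OF g] by simp
      qed
      show "\<phi>' (\<lambda>x. f x + g x) = gadd B (\<phi>' f) (\<phi>' g)"
        unfolding e by (rule pp) (rule addB_C[OF pC[OF f] pC[OF g]])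
    }
    {
      fix c
      have e: "(\<lambda>x. c * f x) = psi (gsmul B c (\<phi>' f))"
      proof -
        have "psi (gsmul B c (\<phi>' f)) = (\<lambda>X. c * psi (\<phi>' f) X)"
          by (rule psi_smul[OF pC[OF f]])
        then show ?thesis unfolding pp2[OF f] by simp
      qed
      show "\<phi>' (\<lambda>x. c * f x) = gsmul B c (\<phi>' f)"
        unfolding e by (rule pp) (rule smulB_C[OF pC[OF f]])
    }
    {
      fix b assume b: "b \<in> gcarr B"
      have e: "dual_ract B f b = psi (gmul B (\<phi>' f) b)"
      proof -
        have "dual_ract B (psi (\<phi>' f)) b = psi (gmul B (\<phi>' f) b)"
          by (rule psi_mod[OF pC[OF f] b])
        then show ?thesis unfolding pp2[OF f] .
      qed
      show "\<phi>' (dual_ract B f b) = gmul B (\<phi>' f) b"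
        unfolding e by (rule pp) (rule mulBC[OF pC[OF f] b])
    }
  next
    fix i
    have "\<phi>' ` gdual_piece B i = \<phi>' ` psi ` shift_piece B l i" by (simp add: psi_deg)
    also have "\<dots> = shift_piece B l i"
    proof
      show "\<phi>' ` psi ` shift_piece B l i \<subseteq> shift_piece B l i"
      proof
        fix y assume "y \<in> \<phi>' ` psi ` shift_piece B l i"
        then obtain F where F: "F \<in> shift_piece B l i" and y: "y = \<phi>' (psi F)" by blast
        have "\<phi>' (psi F) = F" using F shiftB_C pp by blast
        then show "y \<in> shift_piece B l i" using F y by simp
      qed
      show "shift_piece B l i \<subseteq> \<phi>' ` psi ` shift_piece B l i"
      proof
        fix F assume F: "F \<in> shift_piece B l i"
        have "\<phi>' (psi F) = F" using F shiftB_C pp by blast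
        then show "F \<in> \<phi>' ` psi ` shift_piece B l i" using F by (metis imageI)
      qed
    qed
    finally show "\<phi>' ` gdual_piece B i = shift_piece B l i" .
  qed
qed

end

theorem lemma2p26:
  fixes A :: "('k::field, 'a) gr_alg" and G :: "('a \<Rightarrow> 'a) set" and l :: int
  assumes "alg_closed TYPE('k)"
    and "graded_frobenius A l"
    and "finite G"
    and "GrAut_subgroup A G"
  shows "graded_frobenius (skew_group_alg A G) l"
proof -
  have GA: "graded_algebra A" and lf: "locally_finite A"
    and ex: "\<exists>\<phi> :: ('a \<Rightarrow> 'k) \<Rightarrow> 'a.
        bij_betw \<phi> (gdual A) (gcarr A) \<and>
        (\<forall>f\<in>gdual A. \<forall>g\<in>gdual A. \<phi> (\<lambda>x. f x + g x) = gadd A (\<phi> f) (\<phi> g)) \<and>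
        (\<forall>c. \<forall>f\<in>gdual A. \<phi> (\<lambda>x. c * f x) = gsmul A c (\<phi> f)) \<and>
        (\<forall>f\<in>gdual A. \<forall>b\<in>gcarr A. \<phi> (dual_ract A f b) = gmul A (\<phi> f) b) \<and>
        (\<forall>i. \<phi> ` gdual_piece A i = shift_piece A l i)"
    using assms(2) unfolding graded_frobenius_def by blast+
  then obtain \<phi> :: "('a \<Rightarrow> 'k) \<Rightarrow> 'a" where
    p: "bij_betw \<phi> (gdual A) (gcarr A)"
       "\<forall>f\<in>gdual A. \<forall>g\<in>gdual A. \<phi> (\<lambda>x. f x + g x) = gadd A (\<phi> f) (\<phi> g)"
       "\<forall>f\<in>gdual A. \<forall>b\<in>gcarr A. \<phi> (dual_ract A f b) = gmul A (\<phi> f) b"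
       "\<forall>i. \<phi> ` gdual_piece A i = shift_piece A l i"
    by blast
  interpret skew A G using GA assms(3,4) by unfold_locales
  interpret frob A G l \<phi>
    by unfold_locales (use lf p in blast)+
  show ?thesis by (rule frob_B)
qed



end
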